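(* Let $\Omega\subset\mathbb{R}^N$, $N\geq 3$, be bounded and open, $J=\{1,\dots,N\}$, $D_j=\partial/\partial x_j$. Assume $q>0$, $0<\theta<1$; $f\in L^1(\Omega)$, $f\geq0$, $f\not\equiv0$; $2\leq p_1\leq\dots\leq p_N$ with $2\leq\overline{p}:=N(\sum_{j}1/p_j)^{-1}<N$; $a,b$ measurable with $0<\alpha\leq a\leq\beta$, $0<\mu\leq b\leq\nu$. For each integer $n\geq1$ let $f_n=\mathcal{T}_n(f)$ and let $u_n\in W_0^{1,(p_j)}(\Omega)$, $u_n\geq0$, satisfy $$\sum_{j\in J}\int_\Omega[a(x)+u_n^q]|D_ju_n|^{p_j-2}D_ju_nD_j\varphi\,dx+\sum_{j\in J}\int_\Omega b(x)\frac{u_n|D_ju_n|^{p_j}}{(u_n+\frac1n)^{\theta+1}}\varphi\,dx=\int_\Omega f_n\varphi\,dx$$ for all $\varphi\in W_0^{1,(p_j)}(\Omega)\cap L^\infty(\Omega)$. Then for every $n\geq1$ and every $k>0$, $$\mu\sum_{j\in J}\int_\Omega\frac{u_n|D_ju_n|^{p_j}}{(u_n+\frac1n)^{\theta+1}}\,dx\leq\int_\Omega f\,dx,\qquad \frac1k\sum_{j\in J}\int_\Omega[a(x)+u_n^q]|D_j\mathcal{T}_k(u_n)|^{p_j}\,dx\leq\int_\Omega f\frac{\mathcal{T}_k(u_n)}{k}\,dx.$$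
   Context: $\mathcal{T}_k(l)=\max(-k,\min(l,k))$ is the truncation at level $k>0$. $W_0^{1,(p_j)}(\Omega)=\{v\in W_0^{1,1}(\Omega): D_jv\in L^{p_j}(\Omega)\ \forall j\}$. *)

theory Defs
  imports "HOL-Analysis.Analysis"
begin

definition trunc :: "real \<Rightarrow> real \<Rightarrow> real" where
  "trunc k l = max (- k) (min l k)"

definition pder :: "'n::finite \<Rightarrow> (real^'n \<Rightarrow> real) \<Rightarrow> (real^'n \<Rightarrow> real)" where
  "pder j \<phi> = (\<lambda>x. frechet_derivative \<phi> (at x) (axis j 1))"

definition smooth_fun :: "(real^'n::finite \<Rightarrow> real) \<Rightarrow> bool" where
  "smooth_fun \<phi> \<longleftrightarrow> (\<forall>js :: 'n list. (foldr pder js \<phi>) differentiable_on UNIV)"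

definition test_fun :: "(real^'n::finite) set \<Rightarrow> (real^'n \<Rightarrow> real) \<Rightarrow> bool" where
  "test_fun \<Omega> \<phi> \<longleftrightarrow> smooth_fun \<phi> \<and> compact (closure {x. \<phi> x \<noteq> 0})
      \<and> closure {x. \<phi> x \<noteq> 0} \<subseteq> \<Omega>"

definition loc_integrable :: "(real^'n::finite) set \<Rightarrow> (real^'n \<Rightarrow> real) \<Rightarrow> bool" where
  "loc_integrable \<Omega> u \<longleftrightarrow> (\<forall>K. compact K \<and> K \<subseteq> \<Omega> \<longrightarrow> set_integrable lebesgue K u)"

definition weak_pderiv :: "(real^'n::finite) set \<Rightarrow> 'n \<Rightarrow> (real^'n \<Rightarrow> real) \<Rightarrow> (real^'n \<Rightarrow> real) \<Rightarrow> bool" where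
  "weak_pderiv \<Omega> j u g \<longleftrightarrow> loc_integrable \<Omega> u \<and> loc_integrable \<Omega> g \<and>
     (\<forall>\<phi>. test_fun \<Omega> \<phi> \<longrightarrow>
        (LINT x:\<Omega>|lebesgue. u x * pder j \<phi> x) = - (LINT x:\<Omega>|lebesgue. g x * \<phi> x))"

definition Lp :: "(real^'n::finite) set \<Rightarrow> real \<Rightarrow> (real^'n \<Rightarrow> real) \<Rightarrow> bool" where
  "Lp \<Omega> p u \<longleftrightarrow> u \<in> borel_measurable (lebesgue_on \<Omega>) \<and>
     integrable (lebesgue_on \<Omega>) (\<lambda>x. \<bar>u x\<bar> powr p)"

definition Linf :: "(real^'n::finite) set \<Rightarrow> (real^'n \<Rightarrow> real) \<Rightarrow> bool" where
  "Linf \<Omega> u \<longleftrightarrow> u \<in> borel_measurable (lebesgue_on \<Omega>) \<and>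
     (\<exists>C. AE x in lebesgue_on \<Omega>. \<bar>u x\<bar> \<le> C)"

text \<open>u belongs to W_0^{1,1}(Omega) with weak gradient Du (closure of C_c^infinity in the
  W^{1,1} norm).\<close>
definition W011 :: "(real^'n::finite) set \<Rightarrow> (real^'n \<Rightarrow> real) \<Rightarrow> ('n \<Rightarrow> real^'n \<Rightarrow> real) \<Rightarrow> bool" where
  "W011 \<Omega> u Du \<longleftrightarrow> Lp \<Omega> 1 u \<and> (\<forall>j. Lp \<Omega> 1 (Du j) \<and> weak_pderiv \<Omega> j u (Du j)) \<and>
     (\<exists>\<phi> :: nat \<Rightarrow> real^'n \<Rightarrow> real. (\<forall>m. test_fun \<Omega> (\<phi> m)) \<and>
        (\<lambda>m. LINT x:\<Omega>|lebesgue. \<bar>\<phi> m x - u x\<bar>) \<longlonglongrightarrow> 0 \<and>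
        (\<forall>j. (\<lambda>m. LINT x:\<Omega>|lebesgue. \<bar>pder j (\<phi> m) x - Du j x\<bar>) \<longlonglongrightarrow> 0))"

definition W01p :: "(real^'n::finite) set \<Rightarrow> ('n \<Rightarrow> real) \<Rightarrow> (real^'n \<Rightarrow> real) \<Rightarrow> ('n \<Rightarrow> real^'n \<Rightarrow> real) \<Rightarrow> bool" where
  "W01p \<Omega> p u Du \<longleftrightarrow> W011 \<Omega> u Du \<and> (\<forall>j. Lp \<Omega> (p j) (Du j))"

end

theory Submission
  imports Defs
begin

definition smoothN :: "nat \<Rightarrow> (real^'n::finite \<Rightarrow> real) \<Rightarrow> bool" where
  "smoothN n g \<longleftrightarrow> (\<forall>js::'n list. length js \<le> n \<longrightarrow> foldr pder js g differentiable_on UNIV)"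

lemma smoothN_0: "smoothN 0 g \<longleftrightarrow> g differentiable_on UNIV"
  by (simp add: smoothN_def)

lemma smoothN_Suc: "smoothN (Suc n) g \<longleftrightarrow> g differentiable_on UNIV \<and> (\<forall>j. smoothN n (pder j g))"
proof
  assume H: "smoothN (Suc n) g"
  show "g differentiable_on UNIV \<and> (\<forall>j. smoothN n (pder j g))"
  proof
    show "g differentiable_on UNIV" using H[unfolded smoothN_def, rule_format, of "[]"] by simp
    show "\<forall>j. smoothN n (pder j g)"
      unfolding smoothN_def
    proof (intro allI impI)
      fix j and js :: "'a list" assume "length js \<le> n"
      then show "foldr pder js (pder j g) differentiable_on UNIV"
        using H[unfolded smoothN_def, rule_format, of "js @ [j]"] by simp
    qed
  qed
next
  assume H: "g differentiable_on UNIV \<and> (\<forall>j. smoothN n (pder j g))"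
  show "smoothN (Suc n) g"
    unfolding smoothN_def
  proof (intro allI impI)
    fix js :: "'a list" assume L: "length js \<le> Suc n"
    show "foldr pder js g differentiable_on UNIV"
    proof (cases js rule: rev_cases)
      case Nil then show ?thesis using H by simp
    next
      case (snoc ys y)
      then show ?thesis using H L unfolding smoothN_def by simp
    qed
  qed
qed

lemma smoothN_mono: "smoothN (Suc n) g \<Longrightarrow> smoothN n g"
  by (simp add: smoothN_def)

lemma smooth_fun_iff: "smooth_fun g \<longleftrightarrow> (\<forall>n. smoothN n g)"
  unfolding smooth_fun_def smoothN_def by auto

lemma diff_has_pder:
  assumes "g differentiable (at x)"
  shows "(g has_derivative frechet_derivative g (at x)) (at x)"
  using assms frechet_derivative_works by blast

lemma pder_add:
  assumes "g differentiable_on UNIV" "h differentiable_on UNIV"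
  shows "pder j (\<lambda>x. g x + h x) = (\<lambda>x. pder j g x + pder j h x)"
proof
  fix x
  have g: "(g has_derivative frechet_derivative g (at x)) (at x)"
    using assms(1) by (simp add: differentiable_on_def frechet_derivative_works)
  have h: "(h has_derivative frechet_derivative h (at x)) (at x)"
    using assms(2) by (simp add: differentiable_on_def frechet_derivative_works)
  have "((\<lambda>x. g x + h x) has_derivative (\<lambda>v. frechet_derivative g (at x) v + frechet_derivative h (at x) v)) (at x)"
    by (rule has_derivative_add[OF g h])
  then have "frechet_derivative (\<lambda>x. g x + h x) (at x) = (\<lambda>v. frechet_derivative g (at x) v + frechet_derivative h (at x) v)"
    by (rule frechet_derivative_at[symmetric])
  then show "pder j (\<lambda>x. g x + h x) x = pder j g x + pder j h x"
    by (simp add: pder_def)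
qed

lemma pder_mult:
  assumes "g differentiable_on UNIV" "h differentiable_on UNIV"
  shows "pder j (\<lambda>x. g x * h x) = (\<lambda>x. pder j g x * h x + g x * pder j h x)"
proof
  fix x
  have g: "(g has_derivative frechet_derivative g (at x)) (at x)"
    using assms(1) by (simp add: differentiable_on_def frechet_derivative_works)
  have h: "(h has_derivative frechet_derivative h (at x)) (at x)"
    using assms(2) by (simp add: differentiable_on_def frechet_derivative_works)
  have "((\<lambda>x. g x * h x) has_derivative (\<lambda>v. g x * frechet_derivative h (at x) v + frechet_derivative g (at x) v * h x)) (at x)"
    by (rule has_derivative_mult[OF g h])
  then have "frechet_derivative (\<lambda>x. g x * h x) (at x) = (\<lambda>v. g x * frechet_derivative h (at x) v + frechet_derivative g (at x) v * h x)"
    by (rule frechet_derivative_at[symmetric])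
  then show "pder j (\<lambda>x. g x * h x) x = pder j g x * h x + g x * pder j h x"
    by (simp add: pder_def)
qed

lemma pder_const: "pder j (\<lambda>x. c) = (\<lambda>x. 0)"
proof
  fix x
  have "((\<lambda>x::real^'a. c) has_derivative (\<lambda>v. 0)) (at x)" by (rule has_derivative_const)
  then have "frechet_derivative (\<lambda>x::real^'a. c) (at x) = (\<lambda>v. 0)"
    by (rule frechet_derivative_at[symmetric])
  then show "pder j (\<lambda>x::real^'a. c) x = 0" by (simp add: pder_def)
qed

lemma smoothN_const: "smoothN n (\<lambda>x. c)"
proof (induction n arbitrary: c)
  case 0 then show ?case by (simp add: smoothN_0)
next
  case (Suc n) then show ?case by (simp add: smoothN_Suc pder_const)
qed

lemma smoothN_add: "smoothN n g \<Longrightarrow> smoothN n h \<Longrightarrow> smoothN n (\<lambda>x. g x + h x)"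
proof (induction n arbitrary: g h)
  case 0 then show ?case by (auto simp: smoothN_0 intro: differentiable_on_add)
next
  case (Suc n)
  then show ?case
    by (auto simp: smoothN_Suc pder_add intro: differentiable_on_add)
qed

lemma smoothN_mult: "smoothN n g \<Longrightarrow> smoothN n h \<Longrightarrow> smoothN n (\<lambda>x. g x * h x)"
proof (induction n arbitrary: g h)
  case 0 then show ?case by (auto simp: smoothN_0 intro: differentiable_on_mult)
next
  case (Suc n)
  have gd: "g differentiable_on UNIV" and hd: "h differentiable_on UNIV"
    using Suc.prems by (auto simp: smoothN_Suc)
  show ?case unfolding smoothN_Suc
  proof (intro conjI allI)
    show "(\<lambda>x. g x * h x) differentiable_on UNIV" using gd hd by (intro differentiable_on_mult)
    fix j
    have hn: "smoothN n h" and gn: "smoothN n g" using Suc.prems smoothN_mono by blast+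
    have "smoothN n (\<lambda>x. pder j g x * h x)"
      using Suc.IH[of "pder j g" h] Suc.prems hn by (auto simp: smoothN_Suc)
    moreover have "smoothN n (\<lambda>x. g x * pder j h x)"
      using Suc.IH[of g "pder j h"] Suc.prems gn by (auto simp: smoothN_Suc)
    ultimately show "smoothN n (pder j (\<lambda>x. g x * h x))"
      unfolding pder_mult[OF gd hd] by (rule smoothN_add)
  qed
qed

lemma smooth_const: "smooth_fun (\<lambda>x. c)"
  by (simp add: smooth_fun_iff smoothN_const)
lemma smooth_add: "smooth_fun g \<Longrightarrow> smooth_fun h \<Longrightarrow> smooth_fun (\<lambda>x. g x + h x)"
  by (simp add: smooth_fun_iff smoothN_add)
lemma smooth_mult: "smooth_fun g \<Longrightarrow> smooth_fun h \<Longrightarrow> smooth_fun (\<lambda>x. g x * h x)"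
  by (simp add: smooth_fun_iff smoothN_mult)

lemma smooth_power: "smooth_fun g \<Longrightarrow> smooth_fun (\<lambda>x. g x ^ n)"
proof (induction n)
  case 0 then show ?case by (simp add: smooth_const)
next
  case (Suc n) then show ?case using smooth_mult[of g "\<lambda>x. g x ^ n"] by simp
qed

lemma smooth_sum: "smooth_fun g \<Longrightarrow> smooth_fun (\<lambda>x. \<Sum>i<N. c i * g x ^ Suc i)"
proof (induction N)
  case 0 then show ?case by (simp add: smooth_const)
next
  case (Suc N)
  then show ?case
    using smooth_add[of "\<lambda>x. \<Sum>i<N. c i * g x ^ Suc i" "\<lambda>x. c N * g x ^ Suc N"]
      smooth_mult[OF smooth_const smooth_power[of g "Suc N"], of "c N"] by simp
qed


lemma test_diff: "test_fun \<Omega> \<phi> \<Longrightarrow> \<phi> differentiable_on UNIV"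
proof -
  assume "test_fun \<Omega> \<phi>"
  then have "foldr pder ([]::'a list) \<phi> differentiable_on UNIV"
    unfolding test_fun_def smooth_fun_def by blast
  then show ?thesis by simp
qed

lemma test_pder_diff: "test_fun \<Omega> \<phi> \<Longrightarrow> pder j \<phi> differentiable_on UNIV"
proof -
  assume "test_fun \<Omega> \<phi>"
  then have "foldr pder [j] \<phi> differentiable_on UNIV"
    unfolding test_fun_def smooth_fun_def by blast
  then show ?thesis by simp
qed

lemma test_cont: "test_fun \<Omega> \<phi> \<Longrightarrow> continuous_on UNIV \<phi>"
  using test_diff differentiable_imp_continuous_on by blast

lemma test_pder_cont: "test_fun \<Omega> \<phi> \<Longrightarrow> continuous_on UNIV (pder j \<phi>)"
  using test_pder_diff differentiable_imp_continuous_on by blast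

lemma outside_closure_zero: "x \<notin> closure {x. g x \<noteq> 0} \<Longrightarrow> g x = (0::real)"
proof -
  assume a: "x \<notin> closure {x. g x \<noteq> 0}"
  show "g x = 0"
  proof (rule ccontr)
    assume "g x \<noteq> 0"
    then have "x \<in> {x. g x \<noteq> 0}" by simp
    then have "x \<in> closure {x. g x \<noteq> 0}" by (rule closure_subset[THEN subsetD])
    with a show False by contradiction
  qed
qed

lemma pder_outside_zero:
  fixes g :: "real^'n \<Rightarrow> real"
  assumes "x \<notin> closure {x. g x \<noteq> 0}"
  shows "pder j g x = 0"
proof -
  let ?S = "- closure {x. g x \<noteq> 0}"
  have "open ?S" by (rule open_Compl) (rule closed_closure)
  have "((\<lambda>x. 0::real) has_derivative (\<lambda>v. 0)) (at x)" by (rule has_derivative_const)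
  then have "(g has_derivative (\<lambda>v. 0)) (at x)"
  proof (rule has_derivative_transform_within_open[OF _ \<open>open ?S\<close>])
    show "x \<in> ?S" using assms by simp
    fix y assume "y \<in> ?S"
    then have "y \<notin> closure {x. g x \<noteq> 0}" by simp
    from outside_closure_zero[OF this] show "0 = g y" by (rule sym)
  qed
  then have "frechet_derivative g (at x) = (\<lambda>v. 0)" by (rule frechet_derivative_at[symmetric])
  then show ?thesis by (simp add: pder_def)
qed

lemma cont_compact_support_bounded:
  fixes g :: "'a::topological_space \<Rightarrow> real"
  assumes "continuous_on UNIV g" "compact S" "\<And>x. x \<notin> S \<Longrightarrow> g x = 0"
  shows "\<exists>B. \<forall>x. \<bar>g x\<bar> \<le> B"
proof -
  have "compact (g ` S)" by (rule compact_continuous_image[OF continuous_on_subset[OF assms(1)] assms(2)]) simp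
  then have "bounded (g ` S)" by (rule compact_imp_bounded)
  then obtain B where B: "\<And>y. y \<in> g ` S \<Longrightarrow> \<bar>y\<bar> \<le> B"
    unfolding bounded_real by blast
  show ?thesis
  proof (intro exI allI)
    fix x show "\<bar>g x\<bar> \<le> max B 0"
    proof (cases "x \<in> S")
      case True then have "\<bar>g x\<bar> \<le> B" using B by blast
      then show ?thesis by linarith
    next
      case False then show ?thesis using assms(3)[of x] by simp
    qed
  qed
qed

lemma test_bounded: assumes "test_fun \<Omega> \<phi>" shows "\<exists>B. \<forall>x. \<bar>\<phi> x\<bar> \<le> B"
proof -
  have c: "compact (closure {x. \<phi> x \<noteq> 0})" using assms by (simp add: test_fun_def)
  show ?thesis by (rule cont_compact_support_bounded[OF test_cont[OF assms] c]) (rule outside_closure_zero)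
qed

lemma test_pder_bounded: assumes "test_fun \<Omega> \<phi>" shows "\<exists>B. \<forall>x. \<bar>pder j \<phi> x\<bar> \<le> B"
proof -
  have c: "compact (closure {x. \<phi> x \<noteq> 0})" using assms by (simp add: test_fun_def)
  show ?thesis by (rule cont_compact_support_bounded[OF test_pder_cont[OF assms] c]) (rule pder_outside_zero)
qed

lemma pder_comp:
  fixes g :: "real^'n \<Rightarrow> real"
  assumes Q: "\<And>t. (Q has_real_derivative Q' t) (at t)" and g: "g differentiable_on UNIV"
  shows "pder j (\<lambda>x. Q (g x)) x = Q' (g x) * pder j g x"
proof -
  have gd: "(g has_derivative frechet_derivative g (at x)) (at x)"
    using g by (simp add: differentiable_on_def frechet_derivative_works)
  have Qd: "(Q has_derivative (\<lambda>h. Q' (g x) * h)) (at (g x))"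
    using Q[of "g x"] by (simp add: has_field_derivative_def)
  have "((Q \<circ> g) has_derivative ((\<lambda>h. Q' (g x) * h) \<circ> frechet_derivative g (at x))) (at x)"
    by (rule diff_chain_at[OF gd Qd])
  then have "frechet_derivative (\<lambda>x. Q (g x)) (at x) = (\<lambda>h. Q' (g x) * h) \<circ> frechet_derivative g (at x)"
    by (intro frechet_derivative_at[symmetric]) (simp add: comp_def)
  then show ?thesis by (simp add: pder_def)
qed

definition polyQ :: "(nat \<Rightarrow> real) \<Rightarrow> nat \<Rightarrow> real \<Rightarrow> real" where
  "polyQ c N t = (\<Sum>i<N. c i * t ^ Suc i)"
definition polyQ' :: "(nat \<Rightarrow> real) \<Rightarrow> nat \<Rightarrow> real \<Rightarrow> real" where
  "polyQ' c N t = (\<Sum>i<N. c i * (real (Suc i) * t ^ i))"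

lemma polyQ_deriv: "(polyQ c N has_real_derivative polyQ' c N t) (at t)"
  unfolding polyQ_def[abs_def] polyQ'_def
proof -
  have "((\<lambda>t. c i * t ^ Suc i) has_real_derivative c i * (real (Suc i) * t ^ i)) (at t)" for i
  proof (rule DERIV_cmult)
    show "((\<lambda>t. t ^ Suc i) has_real_derivative real (Suc i) * t ^ i) (at t)"
      using DERIV_pow[of "Suc i" t UNIV] by simp
  qed
  then show "((\<lambda>t. \<Sum>i<N. c i * t ^ Suc i) has_real_derivative (\<Sum>i<N. c i * (real (Suc i) * t ^ i))) (at t)"
    by (rule DERIV_sum)
qed

lemma polyQ_0: "polyQ c N 0 = 0" by (simp add: polyQ_def)

lemma test_polyQ:
  assumes "test_fun \<Omega> \<phi>"
  shows "test_fun \<Omega> (\<lambda>x. polyQ c N (\<phi> x))"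
proof -
  have sm: "smooth_fun \<phi>" using assms by (simp add: test_fun_def)
  have sub: "{x. polyQ c N (\<phi> x) \<noteq> 0} \<subseteq> {x. \<phi> x \<noteq> 0}" by (auto simp: polyQ_0)
  then have sub2: "closure {x. polyQ c N (\<phi> x) \<noteq> 0} \<subseteq> closure {x. \<phi> x \<noteq> 0}"
    by (rule closure_mono)
  show ?thesis unfolding test_fun_def
  proof (intro conjI)
    show "smooth_fun (\<lambda>x. polyQ c N (\<phi> x))" unfolding polyQ_def by (rule smooth_sum[OF sm])
    show "compact (closure {x. polyQ c N (\<phi> x) \<noteq> 0})"
    proof -
      have "compact (closure {x. \<phi> x \<noteq> 0} \<inter> closure {x. polyQ c N (\<phi> x) \<noteq> 0})"
        using assms unfolding test_fun_def by (intro compact_Int_closed) auto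
      moreover have "closure {x. \<phi> x \<noteq> 0} \<inter> closure {x. polyQ c N (\<phi> x) \<noteq> 0} = closure {x. polyQ c N (\<phi> x) \<noteq> 0}"
        using sub2 by blast
      ultimately show ?thesis by simp
    qed
    show "closure {x. polyQ c N (\<phi> x) \<noteq> 0} \<subseteq> \<Omega>" using assms sub2 unfolding test_fun_def by blast
  qed
qed

lemma pder_polyQ:
  assumes "test_fun \<Omega> \<phi>"
  shows "pder j (\<lambda>x. polyQ c N (\<phi> x)) x = polyQ' c N (\<phi> x) * pder j \<phi> x"
  by (rule pder_comp[OF polyQ_deriv test_diff[OF assms]])


lemma line_deriv:
  fixes F :: "real^'n \<Rightarrow> real"
  assumes Fd: "F differentiable_on UNIV"
  shows "((\<lambda>s. F (x + s *\<^sub>R axis j 1)) has_real_derivative pder j F (x + s *\<^sub>R axis j 1)) (at s)"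
proof -
  let ?e = "axis j 1 :: real^'n"
  let ?y = "x + s *\<^sub>R ?e"
  have Fy: "(F has_derivative frechet_derivative F (at ?y)) (at ?y)"
    using Fd by (simp add: differentiable_on_def frechet_derivative_works)
  have lin: "linear (frechet_derivative F (at ?y))"
    using Fy has_derivative_linear by blast
  have L: "((\<lambda>s. x + s *\<^sub>R ?e) has_derivative (\<lambda>h. h *\<^sub>R ?e)) (at s)"
    by (auto intro!: derivative_eq_intros)
  have D1: "((\<lambda>s. F (x + s *\<^sub>R ?e)) has_derivative (\<lambda>h. frechet_derivative F (at ?y) (h *\<^sub>R ?e))) (at s)"
    using diff_chain_at[OF L Fy] by (simp add: comp_def)
  have E: "(\<lambda>h. frechet_derivative F (at ?y) (h *\<^sub>R ?e)) = (*) (pder j F ?y)"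
    using linear_scale[OF lin] by (auto simp: pder_def fun_eq_iff)
  show ?thesis unfolding has_field_derivative_def by (subst E[symmetric]) (rule D1)
qed

lemma cc_bounded_support:
  fixes g :: "real^'n \<Rightarrow> real"
  assumes "compact K" "\<And>x. x \<notin> K \<Longrightarrow> g x = 0"
  shows "\<exists>R>0. \<forall>x. norm x > R \<longrightarrow> g x = 0"
proof -
  obtain R where R: "\<And>x. x \<in> K \<Longrightarrow> norm x \<le> R" "R > 0"
    using compact_imp_bounded[OF assms(1)] unfolding bounded_pos by blast
  show ?thesis
  proof (intro exI[of _ "R+1"] conjI allI impI)
    show "R + 1 > 0" using R by simp
    fix x :: "real^'n" assume "norm x > R + 1"
    then have "x \<notin> K" using R(1)[of x] by linarith
    then show "g x = 0" using assms(2) by simp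
  qed
qed

lemma cc_integrable:
  fixes g :: "real^'n \<Rightarrow> real"
  assumes gc: "continuous_on UNIV g" and K: "compact K" and g0: "\<And>x. x \<notin> K \<Longrightarrow> g x = 0"
  shows "integrable lborel g"
proof -
  obtain B where B: "\<And>x. \<bar>g x\<bar> \<le> B" using cont_compact_support_bounded[OF gc K g0] by blast
  obtain R where R: "R > 0" "\<And>x. norm x > R \<Longrightarrow> g x = 0" using cc_bounded_support[of K g] K g0 by blast
  have w: "integrable lborel (\<lambda>x::real^'n. B * indicator (cball 0 R) x)"
    by (intro integrable_mult_right integrable_real_indicator) (use emeasure_lborel_cball_finite in auto)
  show ?thesis
  proof (rule Bochner_Integration.integrable_bound[OF w])
    show "g \<in> borel_measurable lborel" using borel_measurable_continuous_onI[OF gc] by simp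
    show "AE x in lborel. norm (g x) \<le> norm (B * indicator (cball 0 R) x)"
    proof (intro AE_I2)
      fix x :: "real^'n"
      show "norm (g x) \<le> norm (B * indicator (cball 0 R) x)"
      proof (cases "norm x \<le> R")
        case True then show ?thesis using B[of x] by (auto simp: indicator_def)
      next
        case False then show ?thesis using R(2)[of x] by (auto simp: indicator_def)
      qed
    qed
  qed
qed

lemma lborel_translate: "lborel = distr lborel borel (\<lambda>x::real^'n. c + x)"
proof -
  have "lborel = density (distr lborel borel (\<lambda>x::real^'n. c + (1::real) *\<^sub>R x)) (\<lambda>_. \<bar>1::real\<bar> ^ DIM(real^'n))"
    by (rule lborel_affine) simp
  then show ?thesis by (simp only: scaleR_one abs_one power_one ennreal_1 density_1)
qed

lemma integral_translate:
  fixes F :: "real^'n \<Rightarrow> real"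
  assumes Fb: "F \<in> borel_measurable borel"
  shows "integral\<^sup>L lborel (\<lambda>x. F (c + x)) = integral\<^sup>L lborel F"
proof -
  have eq: "lborel = distr lborel borel (\<lambda>x::real^'n. c + x)"
    by (rule lborel_translate)
  have "integral\<^sup>L lborel F = integral\<^sup>L (distr lborel borel (\<lambda>x::real^'n. c + x)) F"
    by (rule arg_cong[where f="\<lambda>M. integral\<^sup>L M F", OF eq])
  also have "\<dots> = integral\<^sup>L lborel (\<lambda>x. F (c + x))"
    by (rule integral_distr) (use Fb in auto)
  finally show ?thesis by simp
qed

lemma integral_pder_zero:
  fixes F :: "real^'n \<Rightarrow> real"
  assumes Fd: "F differentiable_on UNIV" and Fc: "continuous_on UNIV (pder j F)"
    and K: "compact K" and F0: "\<And>x. x \<notin> K \<Longrightarrow> F x = 0"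
  shows "integral\<^sup>L lborel (pder j F) = 0"
proof -
  let ?e = "axis j 1 :: real^'n"
  have FC: "continuous_on UNIV F" using Fd differentiable_imp_continuous_on by blast
  have Fb: "F \<in> borel_measurable borel" using borel_measurable_continuous_onI[OF FC] .
  have cl: "closure {x. F x \<noteq> 0} \<subseteq> K"
    using F0 closure_minimal[of "{x. F x \<noteq> 0}" K] compact_imp_closed[OF K] by blast
  have P0: "pder j F x = 0" if "x \<notin> K" for x
    using pder_outside_zero[of x F j] that cl by blast
  obtain B where B: "\<And>x. \<bar>pder j F x\<bar> \<le> B" using cont_compact_support_bounded[OF Fc K P0] by blast
  obtain R where R: "R > 0" "\<And>x. norm x > R \<Longrightarrow> F x = 0" using cc_bounded_support[of K F] K F0 by blast
  define t where "t m = inverse (real (Suc m))" for m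
  have t_pos: "t m > 0" for m by (simp add: t_def)
  have t_le: "t m \<le> 1" for m by (auto simp: t_def inverse_le_1_iff)
  define D where "D m x = (F (x + t m *\<^sub>R ?e) - F x) / t m" for m x
  have FI: "integrable lborel F" by (rule cc_integrable[OF FC K F0])
  have shiftI: "integrable lborel (\<lambda>x. F (x + s *\<^sub>R ?e))" for s
  proof -
    have "integrable (distr lborel borel (\<lambda>x. s *\<^sub>R ?e + x)) F"
      using FI by (subst (asm) lborel_translate[of "s *\<^sub>R ?e"])
    then have "integrable lborel (\<lambda>x. F (s *\<^sub>R ?e + x))"
      using integrable_distr_eq[of "\<lambda>x. s *\<^sub>R ?e + x" lborel borel F] Fb by simp
    then show ?thesis by (simp add: add.commute)
  qed
  have Dint: "integral\<^sup>L lborel (D m) = 0" for m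
  proof -
    have "integral\<^sup>L lborel (D m) = (integral\<^sup>L lborel (\<lambda>x. F (x + t m *\<^sub>R ?e)) - integral\<^sup>L lborel F) / t m"
      unfolding D_def using shiftI FI by simp
    also have "integral\<^sup>L lborel (\<lambda>x. F (x + t m *\<^sub>R ?e)) = integral\<^sup>L lborel F"
      using integral_translate[OF Fb, of "t m *\<^sub>R ?e"] by (simp add: add.commute)
    finally show ?thesis by simp
  qed
  have tlim: "filterlim t (at 0) sequentially"
    unfolding filterlim_at using t_pos LIMSEQ_inverse_real_of_nat
    by (auto simp: t_def[abs_def] less_imp_neq[symmetric] intro!: always_eventually)
  have Dlim: "(\<lambda>m. D m x) \<longlonglongrightarrow> pder j F x" for x
  proof -
    have "((\<lambda>s. F (x + s *\<^sub>R ?e)) has_real_derivative pder j F (x + 0 *\<^sub>R ?e)) (at 0)"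
      by (rule line_deriv[OF Fd])
    then have "((\<lambda>s. (F (x + s *\<^sub>R ?e) - F (x + 0 *\<^sub>R ?e)) / (s - 0)) \<longlongrightarrow> pder j F x) (at 0)"
      unfolding has_field_derivative_iff by simp
    then have "((\<lambda>s. (F (x + s *\<^sub>R ?e) - F x) / s) \<longlongrightarrow> pder j F x) (at 0)" by simp
    from filterlim_compose[OF this tlim] show ?thesis by (simp add: D_def)
  qed
  have Dbound: "\<bar>D m x\<bar> \<le> B * indicator (cball 0 (R + 1)) x" for m x
  proof (cases "norm x \<le> R + 1")
    case True
    obtain z where "0 < z" "z < t m"
      "F (x + t m *\<^sub>R ?e) - F (x + 0 *\<^sub>R ?e) = (t m - 0) * pder j F (x + z *\<^sub>R ?e)"
      using MVT2[of 0 "t m" "\<lambda>s. F (x + s *\<^sub>R ?e)" "\<lambda>s. pder j F (x + s *\<^sub>R ?e)"] t_pos[of m]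
        line_deriv[OF Fd] by blast
    then have "D m x = pder j F (x + z *\<^sub>R ?e)" using t_pos[of m] by (simp add: D_def)
    then show ?thesis using True B by (simp add: indicator_def)
  next
    case False
    have "norm (x + t m *\<^sub>R ?e) \<ge> norm x - norm (t m *\<^sub>R ?e)" by (rule norm_diff_ineq)
    moreover have "norm (t m *\<^sub>R ?e) \<le> 1" using t_pos[of m] t_le[of m] by simp
    ultimately have "norm (x + t m *\<^sub>R ?e) > R" using False by simp
    then show ?thesis using False R(2)[of x] R(2)[of "x + t m *\<^sub>R ?e"] by (simp add: D_def indicator_def)
  qed
  have w: "integrable lborel (\<lambda>x::real^'n. B * indicator (cball 0 (R+1)) x)"
    by (intro integrable_mult_right integrable_real_indicator) (use emeasure_lborel_cball_finite in auto)
  have "(\<lambda>m. integral\<^sup>L lborel (D m)) \<longlonglongrightarrow> integral\<^sup>L lborel (pder j F)"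
  proof (rule integral_dominated_convergence[OF _ _ w])
    show "pder j F \<in> borel_measurable lborel" using borel_measurable_continuous_onI[OF Fc] by simp
    show "D m \<in> borel_measurable lborel" for m
      unfolding D_def[abs_def] using Fb by measurable
    show "AE x in lborel. (\<lambda>m. D m x) \<longlonglongrightarrow> pder j F x" using Dlim by simp
    show "AE x in lborel. norm (D m x) \<le> B * indicator (cball 0 (R + 1)) x" for m
      using Dbound by simp
  qed
  then have "(\<lambda>m. 0::real) \<longlonglongrightarrow> integral\<^sup>L lborel (pder j F)" using Dint by simp
  then show ?thesis using LIMSEQ_const_iff by metis
qed


lemma integral_on_lborel:
  fixes h :: "real^'n \<Rightarrow> real"
  assumes \<Omega>: "\<Omega> \<in> sets lebesgue" and hb: "h \<in> borel_measurable lborel"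
    and h0: "\<And>x. x \<notin> \<Omega> \<Longrightarrow> h x = 0"
  shows "integral\<^sup>L (lebesgue_on \<Omega>) h = integral\<^sup>L lborel h"
proof -
  have "integral\<^sup>L (lebesgue_on \<Omega>) h = integral\<^sup>L lebesgue (\<lambda>x. indicator \<Omega> x *\<^sub>R h x)"
    by (rule integral_restrict_space) (use \<Omega> in simp)
  also have "(\<lambda>x. indicator \<Omega> x *\<^sub>R h x) = h"
  proof
    fix x show "indicator \<Omega> x *\<^sub>R h x = h x"
      by (cases "x \<in> \<Omega>") (simp_all add: h0)
  qed
  also have "integral\<^sup>L lebesgue h = integral\<^sup>L lborel h"
    by (rule integral_completion) (use hb in simp)
  finally show ?thesis .
qed

lemma integrable_on_lborel:
  fixes h :: "real^'n \<Rightarrow> real"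
  assumes \<Omega>: "\<Omega> \<in> sets lebesgue" and hi: "integrable lborel h"
  shows "integrable (lebesgue_on \<Omega>) h"
proof -
  have hb: "h \<in> borel_measurable lborel" using hi by (rule borel_measurable_integrable)
  have "integrable lebesgue h" using hi hb by (simp add: integrable_completion)
  then have "integrable lebesgue (\<lambda>x. indicator \<Omega> x *\<^sub>R h x)"
    by (rule integrable_mult_indicator[OF \<Omega>])
  then show ?thesis by (subst integrable_restrict_space) (use \<Omega> in simp_all)
qed

lemma ibp_test:
  fixes \<psi> \<eta> :: "real^'n \<Rightarrow> real"
  assumes \<Omega>: "\<Omega> \<in> sets lebesgue" and \<psi>: "test_fun \<Omega> \<psi>" and \<eta>: "test_fun \<Omega> \<eta>"
  shows "integral\<^sup>L (lebesgue_on \<Omega>) (\<lambda>x. \<psi> x * pder j \<eta> x) =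
         - integral\<^sup>L (lebesgue_on \<Omega>) (\<lambda>x. pder j \<psi> x * \<eta> x)"
proof -
  let ?K = "closure {x. \<psi> x \<noteq> 0}"
  have K: "compact ?K" and KO: "?K \<subseteq> \<Omega>" using \<psi> by (auto simp: test_fun_def)
  have z1: "\<psi> x = 0" if "x \<notin> ?K" for x using outside_closure_zero[OF that] .
  have z2: "pder j \<psi> x = 0" if "x \<notin> ?K" for x using pder_outside_zero[OF that] .
  have d1: "\<psi> differentiable_on UNIV" using test_diff[OF \<psi>] .
  have d2: "\<eta> differentiable_on UNIV" using test_diff[OF \<eta>] .
  have c1: "continuous_on UNIV \<psi>" using test_cont[OF \<psi>] .
  have c2: "continuous_on UNIV \<eta>" using test_cont[OF \<eta>] .
  have c3: "continuous_on UNIV (pder j \<psi>)" using test_pder_cont[OF \<psi>] .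
  have c4: "continuous_on UNIV (pder j \<eta>)" using test_pder_cont[OF \<eta>] .
  let ?F = "\<lambda>x. \<psi> x * \<eta> x"
  have Fd: "?F differentiable_on UNIV" using d1 d2 by (rule differentiable_on_mult)
  have pF: "pder j ?F = (\<lambda>x. pder j \<psi> x * \<eta> x + \<psi> x * pder j \<eta> x)"
    by (rule pder_mult[OF d1 d2])
  have cA: "continuous_on UNIV (\<lambda>x. pder j \<psi> x * \<eta> x)" using c3 c2 by (rule continuous_on_mult)
  have cB: "continuous_on UNIV (\<lambda>x. \<psi> x * pder j \<eta> x)" using c1 c4 by (rule continuous_on_mult)
  have Fc: "continuous_on UNIV (pder j ?F)" unfolding pF using cA cB by (rule continuous_on_add)
  have F0: "?F x = 0" if "x \<notin> ?K" for x using z1[OF that] by simp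
  have "integral\<^sup>L lborel (pder j ?F) = 0" by (rule integral_pder_zero[OF Fd Fc K F0])
  moreover have iA: "integrable lborel (\<lambda>x. pder j \<psi> x * \<eta> x)"
  proof (rule cc_integrable[OF cA K])
    fix x assume "x \<notin> ?K" from z2[OF this] show "pder j \<psi> x * \<eta> x = 0" by simp
  qed
  moreover have iB: "integrable lborel (\<lambda>x. \<psi> x * pder j \<eta> x)"
  proof (rule cc_integrable[OF cB K])
    fix x assume "x \<notin> ?K" from z1[OF this] show "\<psi> x * pder j \<eta> x = 0" by simp
  qed
  ultimately have sum0: "integral\<^sup>L lborel (\<lambda>x. pder j \<psi> x * \<eta> x) + integral\<^sup>L lborel (\<lambda>x. \<psi> x * pder j \<eta> x) = 0"
    unfolding pF by simp
  have eA: "integral\<^sup>L (lebesgue_on \<Omega>) (\<lambda>x. pder j \<psi> x * \<eta> x) = integral\<^sup>L lborel (\<lambda>x. pder j \<psi> x * \<eta> x)"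
  proof (rule integral_on_lborel[OF \<Omega>])
    show "(\<lambda>x. pder j \<psi> x * \<eta> x) \<in> borel_measurable lborel" using borel_measurable_continuous_onI[OF cA] by simp
    fix x assume "x \<notin> \<Omega>" then have "x \<notin> ?K" using KO by blast
    from z2[OF this] show "pder j \<psi> x * \<eta> x = 0" by simp
  qed
  have eB: "integral\<^sup>L (lebesgue_on \<Omega>) (\<lambda>x. \<psi> x * pder j \<eta> x) = integral\<^sup>L lborel (\<lambda>x. \<psi> x * pder j \<eta> x)"
  proof (rule integral_on_lborel[OF \<Omega>])
    show "(\<lambda>x. \<psi> x * pder j \<eta> x) \<in> borel_measurable lborel" using borel_measurable_continuous_onI[OF cB] by simp
    fix x assume "x \<notin> \<Omega>" then have "x \<notin> ?K" using KO by blast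
    from z1[OF this] show "\<psi> x * pder j \<eta> x = 0" by simp
  qed
  show ?thesis using sum0 eA eB by linarith
qed


definition gfun :: "real \<Rightarrow> real \<Rightarrow> real \<Rightarrow> real" where
  "gfun k \<epsilon> t = max 0 (min 1 ((k + \<epsilon> - \<bar>t\<bar>) / \<epsilon>))"

lemma gfun_range: "0 \<le> gfun k \<epsilon> t" "gfun k \<epsilon> t \<le> 1"
  by (auto simp: gfun_def)

lemma gfun_one: "\<epsilon> > 0 \<Longrightarrow> \<bar>t\<bar> \<le> k \<Longrightarrow> gfun k \<epsilon> t = 1"
  by (auto simp: gfun_def field_simps)

lemma gfun_zero: "\<epsilon> > 0 \<Longrightarrow> \<bar>t\<bar> \<ge> k + \<epsilon> \<Longrightarrow> gfun k \<epsilon> t = 0"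
proof -
  assume e: "\<epsilon> > 0" and t: "\<bar>t\<bar> \<ge> k + \<epsilon>"
  have "(k + \<epsilon> - \<bar>t\<bar>) / \<epsilon> \<le> 0" using e t by (simp add: divide_nonpos_pos)
  then show ?thesis by (simp add: gfun_def)
qed

lemma gfun_even: "gfun k \<epsilon> (- t) = gfun k \<epsilon> t"
  by (simp add: gfun_def)

lemma gfun_cont: "\<epsilon> > 0 \<Longrightarrow> continuous_on UNIV (gfun k \<epsilon>)"
  unfolding gfun_def[abs_def] by (intro continuous_intros) auto

lemma trunc_lip: "\<bar>trunc k a - trunc k b\<bar> \<le> \<bar>a - b\<bar>"
  unfolding trunc_def by (simp add: max_def min_def abs_if) 

lemma trunc_neg: "k \<ge> 0 \<Longrightarrow> trunc k (- t) = - trunc k t"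
  unfolding trunc_def by (simp add: max_def min_def)

lemma trunc_abs_le: "k > 0 \<Longrightarrow> \<bar>trunc k t\<bar> \<le> \<bar>t\<bar>" "k > 0 \<Longrightarrow> \<bar>trunc k t\<bar> \<le> k"
  unfolding trunc_def by (auto simp: max_def min_def abs_if)

lemma mvt_bounds:
  assumes ab: "a \<le> b" and d: "\<And>s. a \<le> s \<Longrightarrow> s \<le> b \<Longrightarrow> (f has_real_derivative f' s) (at s)"
    and lo: "\<And>s. a \<le> s \<Longrightarrow> s \<le> b \<Longrightarrow> lo \<le> f' s" and hi: "\<And>s. a \<le> s \<Longrightarrow> s \<le> b \<Longrightarrow> f' s \<le> hi"
  shows "lo * (b - a) \<le> f b - f a \<and> f b - f a \<le> hi * (b - a)"
proof (cases "a = b")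
  case True then show ?thesis by simp
next
  case False
  then have "a < b" using ab by simp
  then obtain z where z: "a < z" "z < b" "f b - f a = (b - a) * f' z"
    using MVT2[of a b f f'] d by blast
  have "lo \<le> f' z" "f' z \<le> hi" using z lo hi by auto
  moreover have "b - a \<ge> 0" using ab by simp
  ultimately show ?thesis using z(3)
    by (simp add: mult_right_mono mult.commute)
qed

lemma half_bound:
  assumes Qd: "\<And>s. (Q has_real_derivative Q' s) (at s)" and Q0: "Q 0 = 0"
    and k: "k > 0" and e: "\<epsilon> > 0"
    and H: "\<And>s. 0 \<le> s \<Longrightarrow> s \<le> M \<Longrightarrow> \<bar>Q' s - gfun k \<epsilon> s\<bar> \<le> \<delta>"
    and t: "0 \<le> t" "t \<le> M"
  shows "\<bar>Q t - trunc k t\<bar> \<le> \<delta> * t + \<epsilon>"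
proof -
  have d: "\<And>s. (Q has_real_derivative Q' s) (at s)" by (rule Qd)
  have g01: "\<And>s. 0 \<le> gfun k \<epsilon> s \<and> gfun k \<epsilon> s \<le> 1" using gfun_range by auto
  have A: "(1 - \<delta>) * (b - 0) \<le> Q b - Q 0 \<and> Q b - Q 0 \<le> (1 + \<delta>) * (b - 0)" if "0 \<le> b" "b \<le> k" "b \<le> M" for b
  proof (rule mvt_bounds[OF that(1) d])
    fix s assume s: "0 \<le> s" "s \<le> b"
    have "gfun k \<epsilon> s = 1" using gfun_one[OF e, of s k] s that by simp
    then show "1 - \<delta> \<le> Q' s" "Q' s \<le> 1 + \<delta>" using H[of s] s that by auto
  qed
  have B: "(- \<delta>) * (b - a) \<le> Q b - Q a \<and> Q b - Q a \<le> (1 + \<delta>) * (b - a)" if "0 \<le> a" "a \<le> b" "b \<le> M" for a b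
  proof (rule mvt_bounds[OF that(2) d])
    fix s assume s: "a \<le> s" "s \<le> b"
    show "- \<delta> \<le> Q' s" "Q' s \<le> 1 + \<delta>" using H[of s] g01[of s] s that by auto
  qed
  have C: "(- \<delta>) * (b - a) \<le> Q b - Q a \<and> Q b - Q a \<le> \<delta> * (b - a)" if "k + \<epsilon> \<le> a" "a \<le> b" "b \<le> M" for a b
  proof (rule mvt_bounds[OF that(2) d])
    fix s assume s: "a \<le> s" "s \<le> b"
    have "gfun k \<epsilon> s = 0" using gfun_zero[OF e, of k s] s that by simp
    then show "- \<delta> \<le> Q' s" "Q' s \<le> \<delta>" using H[of s] s that k e by auto
  qed
  have "\<bar>Q' 0 - gfun k \<epsilon> 0\<bar> \<le> \<delta>" using H[of 0] t by simp
  then have dpos: "\<delta> \<ge> 0" by linarith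
  show ?thesis
  proof (cases "t \<le> k")
    case True
    then have "trunc k t = t" using t k by (simp add: trunc_def)
    then show ?thesis using A[of t] True t Q0 e by (simp add: algebra_simps abs_le_iff)
  next
    case False
    have tk: "trunc k t = k" using False k by (simp add: trunc_def)
    have Ak: "(1 - \<delta>) * k \<le> Q k \<and> Q k \<le> (1 + \<delta>) * k" using A[of k] k t False Q0 by simp
    show ?thesis
    proof (cases "t \<le> k + \<epsilon>")
      case True
      have "(- \<delta>) * (t - k) \<le> Q t - Q k \<and> Q t - Q k \<le> (1 + \<delta>) * (t - k)"
        using B[of k t] k t False by simp
      then show ?thesis using Ak tk True dpos e by (simp add: abs_le_iff algebra_simps)
    next
      case False2: False
      have B2: "(- \<delta>) * (k + \<epsilon> - k) \<le> Q (k + \<epsilon>) - Q k \<and> Q (k + \<epsilon>) - Q k \<le> (1 + \<delta>) * (k + \<epsilon> - k)"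
        using B[of k "k + \<epsilon>"] k t False2 e by simp
      have C2: "(- \<delta>) * (t - (k + \<epsilon>)) \<le> Q t - Q (k + \<epsilon>) \<and> Q t - Q (k + \<epsilon>) \<le> \<delta> * (t - (k + \<epsilon>))"
        using C[of "k + \<epsilon>" t] t False2 by simp
      show ?thesis using Ak B2 C2 tk dpos e by (simp add: abs_le_iff algebra_simps)
    qed
  qed
qed

lemma full_bound:
  assumes Qd: "\<And>s. (Q has_real_derivative Q' s) (at s)" and Q0: "Q 0 = 0"
    and k: "k > 0" and e: "\<epsilon> > 0"
    and H: "\<And>s. \<bar>s\<bar> \<le> M \<Longrightarrow> \<bar>Q' s - gfun k \<epsilon> s\<bar> \<le> \<delta>"
    and t: "\<bar>t\<bar> \<le> M"
  shows "\<bar>Q t - trunc k t\<bar> \<le> \<delta> * \<bar>t\<bar> + \<epsilon>"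
proof (cases "t \<ge> 0")
  case True
  show ?thesis using half_bound[OF Qd Q0 k e, of M \<delta> t] H True t by simp
next
  case False
  let ?R = "\<lambda>s. - Q (- s)"
  have Rd: "(?R has_real_derivative Q' (- s)) (at s)" for s
  proof -
    have "((\<lambda>s. Q (- s)) has_real_derivative - Q' (- s)) (at s)"
      using DERIV_mirror[of Q "Q' (-s)" s] Qd[of "- s"] by simp
    then show ?thesis using DERIV_minus by fastforce
  qed
  have "\<bar>?R (- t) - trunc k (- t)\<bar> \<le> \<delta> * (- t) + \<epsilon>"
  proof (rule half_bound[OF Rd _ k e])
    show "- Q (- 0) = 0" using Q0 by simp
    fix s :: real assume "0 \<le> s" "s \<le> M"
    then show "\<bar>Q' (- s) - gfun k \<epsilon> s\<bar> \<le> \<delta>" using H[of "- s"] gfun_even[of k \<epsilon> s] by simp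
  qed (use False t in auto)
  then show ?thesis using False trunc_neg[of k t] k by (simp add: abs_minus_commute)
qed


lemma ind_lim:
  assumes k: "k > 0"
  shows "(\<lambda>i. \<bar>gfun k (inverse (real (Suc i))) t - (if \<bar>t\<bar> \<le> k then 1 else 0)\<bar>) \<longlonglongrightarrow> 0"
proof (cases "\<bar>t\<bar> \<le> k")
  case True
  then have "\<And>i. gfun k (inverse (real (Suc i))) t = 1" by (intro gfun_one) auto
  then show ?thesis using True by simp
next
  case False
  then have "\<bar>t\<bar> - k > 0" by simp
  from order_tendstoD(2)[OF LIMSEQ_inverse_real_of_nat this]
  have ev: "eventually (\<lambda>i. inverse (real (Suc i)) < \<bar>t\<bar> - k) sequentially" .
  have "eventually (\<lambda>i. \<bar>gfun k (inverse (real (Suc i))) t - (if \<bar>t\<bar> \<le> k then 1 else 0)\<bar> = 0) sequentially"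
  proof (rule eventually_mono[OF ev])
    fix i assume "inverse (real (Suc i)) < \<bar>t\<bar> - k"
    then have "gfun k (inverse (real (Suc i))) t = 0" by (intro gfun_zero) auto
    then show "\<bar>gfun k (inverse (real (Suc i))) t - (if \<bar>t\<bar> \<le> k then 1 else 0)\<bar> = 0" using False by simp
  qed
  then show ?thesis by (rule tendsto_eventually)
qed

lemma gfun_ind_bound: "\<bar>gfun k \<epsilon> t - (if \<bar>t\<bar> \<le> k then 1 else 0)\<bar> \<le> 1"
  using gfun_range[of k \<epsilon> t] by auto

lemma step1:
  fixes u :: "'a \<Rightarrow> real" and Du :: "'j::finite \<Rightarrow> 'a \<Rightarrow> real"
  assumes fin: "finite_measure M" and k: "k > 0" and e: "e > 0"
    and uB: "u \<in> borel_measurable M" and DuI: "\<And>j. integrable M (Du j)"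
  shows "\<exists>\<epsilon>>0. (\<forall>j. integral\<^sup>L M (\<lambda>x. \<bar>gfun k \<epsilon> (u x) - (if \<bar>u x\<bar> \<le> k then 1 else 0)\<bar> * \<bar>Du j x\<bar>) < e)
                 \<and> \<epsilon> * measure M (space M) < e"
proof -
  define t where "t i = inverse (real (Suc i))" for i
  have conv: "(\<lambda>i. integral\<^sup>L M (\<lambda>x. \<bar>gfun k (t i) (u x) - (if \<bar>u x\<bar> \<le> k then 1 else 0)\<bar> * \<bar>Du j x\<bar>)) \<longlonglongrightarrow> integral\<^sup>L M (\<lambda>x. 0)" for j
  proof (rule integral_dominated_convergence[where w="\<lambda>x. \<bar>Du j x\<bar>"])
    show "(\<lambda>x. 0::real) \<in> borel_measurable M" by simp
    have DuB: "Du j \<in> borel_measurable M" using DuI by (rule borel_measurable_integrable)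
    show "(\<lambda>x. \<bar>gfun k (t i) (u x) - (if \<bar>u x\<bar> \<le> k then 1 else 0)\<bar> * \<bar>Du j x\<bar>) \<in> borel_measurable M" for i
      unfolding gfun_def using uB DuB by measurable
    show "integrable M (\<lambda>x. \<bar>Du j x\<bar>)" using DuI by (rule integrable_abs)
    show "AE x in M. (\<lambda>i. \<bar>gfun k (t i) (u x) - (if \<bar>u x\<bar> \<le> k then 1 else 0)\<bar> * \<bar>Du j x\<bar>) \<longlonglongrightarrow> 0"
    proof (rule AE_I2)
      fix x
      show "(\<lambda>i. \<bar>gfun k (t i) (u x) - (if \<bar>u x\<bar> \<le> k then 1 else 0)\<bar> * \<bar>Du j x\<bar>) \<longlonglongrightarrow> 0"
        unfolding t_def by (rule tendsto_mult_left_zero[OF ind_lim[OF k]])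
    qed
    show "AE x in M. norm (\<bar>gfun k (t i) (u x) - (if \<bar>u x\<bar> \<le> k then 1 else 0)\<bar> * \<bar>Du j x\<bar>) \<le> \<bar>Du j x\<bar>" for i
    proof (rule AE_I2)
      fix x
      have "\<bar>gfun k (t i) (u x) - (if \<bar>u x\<bar> \<le> k then 1 else 0)\<bar> * \<bar>Du j x\<bar> \<le> 1 * \<bar>Du j x\<bar>"
        by (rule mult_right_mono[OF gfun_ind_bound]) simp
      then show "norm (\<bar>gfun k (t i) (u x) - (if \<bar>u x\<bar> \<le> k then 1 else 0)\<bar> * \<bar>Du j x\<bar>) \<le> \<bar>Du j x\<bar>" by simp
    qed
  qed
  have ev1: "eventually (\<lambda>i. \<forall>j. integral\<^sup>L M (\<lambda>x. \<bar>gfun k (t i) (u x) - (if \<bar>u x\<bar> \<le> k then 1 else 0)\<bar> * \<bar>Du j x\<bar>) < e) sequentially"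
  proof (rule eventually_all_finite)
    fix j
    show "eventually (\<lambda>i. integral\<^sup>L M (\<lambda>x. \<bar>gfun k (t i) (u x) - (if \<bar>u x\<bar> \<le> k then 1 else 0)\<bar> * \<bar>Du j x\<bar>) < e) sequentially"
      using order_tendstoD(2)[OF conv[of j], of e] e by simp
  qed
  have "(\<lambda>i. t i * measure M (space M)) \<longlonglongrightarrow> 0 * measure M (space M)"
    unfolding t_def by (intro tendsto_intros LIMSEQ_inverse_real_of_nat)
  then have ev2: "eventually (\<lambda>i. t i * measure M (space M) < e) sequentially"
    using order_tendstoD(2)[of _ "0 * measure M (space M)" sequentially e] e by simp
  obtain N where NN: "\<And>i. i \<ge> N \<Longrightarrow> (\<forall>j. integral\<^sup>L M (\<lambda>x. \<bar>gfun k (t i) (u x) - (if \<bar>u x\<bar> \<le> k then 1 else 0)\<bar> * \<bar>Du j x\<bar>) < e)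
    \<and> t i * measure M (space M) < e"
    using eventually_conj[OF ev1 ev2] unfolding eventually_sequentially by blast
  define i where "i = N"
  have "(\<forall>j. integral\<^sup>L M (\<lambda>x. \<bar>gfun k (t i) (u x) - (if \<bar>u x\<bar> \<le> k then 1 else 0)\<bar> * \<bar>Du j x\<bar>) < e)
    \<and> t i * measure M (space M) < e" using NN[of i] by (simp add: i_def)
  moreover have "t i > 0" by (simp add: t_def)
  ultimately show ?thesis by (intro exI[of _ "t i"]) simp
qed

lemma step3:
  assumes e: "\<epsilon> > 0" and d: "\<delta> > 0"
  shows "\<exists>c N. \<forall>s. \<bar>s\<bar> \<le> B \<longrightarrow> \<bar>polyQ' c N s - gfun k \<epsilon> s\<bar> \<le> \<delta>"
proof -
  have cont: "continuous_on {-B..B} (gfun k \<epsilon>)"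
    by (rule continuous_on_subset[OF gfun_cont[OF e]]) simp
  obtain P where P: "real_polynomial_function P" "\<And>s. s \<in> {-B..B} \<Longrightarrow> \<bar>gfun k \<epsilon> s - P s\<bar> < \<delta>"
    using Stone_Weierstrass_real_polynomial_function[OF compact_Icc cont d] by blast
  obtain a n where an: "P = (\<lambda>x. \<Sum>i\<le>n. a i * x ^ i)"
    using P(1) unfolding real_polynomial_function_iff_sum by blast
  define c where "c i = a i / real (Suc i)" for i
  have eq: "polyQ' c (Suc n) s = P s" for s
  proof -
    have "polyQ' c (Suc n) s = (\<Sum>i<Suc n. a i * s ^ i)"
      unfolding polyQ'_def c_def by (intro sum.cong) auto
    also have "\<dots> = P s" unfolding an lessThan_Suc_atMost by simp
    finally show ?thesis .
  qed
  show ?thesis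
  proof (intro exI allI impI)
    fix s :: real assume "\<bar>s\<bar> \<le> B"
    then have "s \<in> {-B..B}" by auto
    then show "\<bar>polyQ' c (Suc n) s - gfun k \<epsilon> s\<bar> \<le> \<delta>" using P(2)[of s] eq[of s] by simp
  qed
qed


lemma step2:
  fixes \<phi> :: "nat \<Rightarrow> 'a \<Rightarrow> real" and u :: "'a \<Rightarrow> real"
    and d\<phi> :: "nat \<Rightarrow> 'j::finite \<Rightarrow> 'a \<Rightarrow> real" and Du :: "'j \<Rightarrow> 'a \<Rightarrow> real"
  assumes \<phi>I: "\<And>m. integrable M (\<phi> m)" and uI: "integrable M u"
    and DuI: "\<And>j. integrable M (Du j)"
    and conv1: "(\<lambda>m. integral\<^sup>L M (\<lambda>x. \<bar>\<phi> m x - u x\<bar>)) \<longlonglongrightarrow> 0"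
    and conv2: "\<And>j. (\<lambda>m. integral\<^sup>L M (\<lambda>x. \<bar>d\<phi> m j x - Du j x\<bar>)) \<longlonglongrightarrow> 0"
    and ep: "\<epsilon> > 0" and e: "e > 0"
  shows "\<exists>m. integral\<^sup>L M (\<lambda>x. \<bar>\<phi> m x - u x\<bar>) < e
           \<and> (\<forall>j. integral\<^sup>L M (\<lambda>x. \<bar>d\<phi> m j x - Du j x\<bar>) < e)
           \<and> (\<forall>j. integral\<^sup>L M (\<lambda>x. \<bar>gfun k \<epsilon> (\<phi> m x) - gfun k \<epsilon> (u x)\<bar> * \<bar>Du j x\<bar>) < e)"
proof -
  have dI: "integrable M (\<lambda>x. \<phi> m x - u x)" for m by (rule Bochner_Integration.integrable_diff[OF \<phi>I uI])
  have "(\<lambda>m. integral\<^sup>L M (\<lambda>x. norm (\<phi> m x - u x))) \<longlonglongrightarrow> 0" using conv1 by simp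
  from tendsto_L1_AE_subseq[OF dI this] obtain r :: "nat \<Rightarrow> nat"
    where r: "strict_mono r" "AE x in M. (\<lambda>m. \<phi> (r m) x - u x) \<longlonglongrightarrow> 0" by blast
  have gc: "isCont (gfun k \<epsilon>) t" for t
    using gfun_cont[OF ep, of k] by (simp add: continuous_on_eq_continuous_at)
  have uB: "u \<in> borel_measurable M" using uI by (rule borel_measurable_integrable)
  have \<phi>B: "\<phi> m \<in> borel_measurable M" for m using \<phi>I by (rule borel_measurable_integrable)
  have conv3: "(\<lambda>m. integral\<^sup>L M (\<lambda>x. \<bar>gfun k \<epsilon> (\<phi> (r m) x) - gfun k \<epsilon> (u x)\<bar> * \<bar>Du j x\<bar>)) \<longlonglongrightarrow> integral\<^sup>L M (\<lambda>x. 0)" for j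
  proof (rule integral_dominated_convergence[where w="\<lambda>x. \<bar>Du j x\<bar>"])
    show "(\<lambda>x. 0::real) \<in> borel_measurable M" by simp
    have DuB: "Du j \<in> borel_measurable M" using DuI by (rule borel_measurable_integrable)
    show "(\<lambda>x. \<bar>gfun k \<epsilon> (\<phi> (r m) x) - gfun k \<epsilon> (u x)\<bar> * \<bar>Du j x\<bar>) \<in> borel_measurable M" for m
      unfolding gfun_def using uB DuB \<phi>B[of "r m"] by measurable
    show "integrable M (\<lambda>x. \<bar>Du j x\<bar>)" using DuI by (rule integrable_abs)
    show "AE x in M. (\<lambda>m. \<bar>gfun k \<epsilon> (\<phi> (r m) x) - gfun k \<epsilon> (u x)\<bar> * \<bar>Du j x\<bar>) \<longlonglongrightarrow> 0"
      using r(2)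
    proof eventually_elim
      case (elim x)
      have "(\<lambda>m. (\<phi> (r m) x - u x) + u x) \<longlonglongrightarrow> 0 + u x"
        by (rule tendsto_add[OF elim tendsto_const])
      then have "(\<lambda>m. \<phi> (r m) x) \<longlonglongrightarrow> u x" by simp
      then have "(\<lambda>m. gfun k \<epsilon> (\<phi> (r m) x)) \<longlonglongrightarrow> gfun k \<epsilon> (u x)"
        by (rule isCont_tendsto_compose[OF gc])
      then have "(\<lambda>m. gfun k \<epsilon> (\<phi> (r m) x) - gfun k \<epsilon> (u x)) \<longlonglongrightarrow> 0"
        by (rule LIM_zero)
      then have "(\<lambda>m. \<bar>gfun k \<epsilon> (\<phi> (r m) x) - gfun k \<epsilon> (u x)\<bar>) \<longlonglongrightarrow> 0"
        by (rule tendsto_rabs_zero)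
      then show ?case by (rule tendsto_mult_left_zero)
    qed
    show "AE x in M. norm (\<bar>gfun k \<epsilon> (\<phi> (r m) x) - gfun k \<epsilon> (u x)\<bar> * \<bar>Du j x\<bar>) \<le> \<bar>Du j x\<bar>" for m
    proof (rule AE_I2)
      fix x
      have "\<bar>gfun k \<epsilon> (\<phi> (r m) x) - gfun k \<epsilon> (u x)\<bar> \<le> 1"
        using gfun_range[of k \<epsilon> "\<phi> (r m) x"] gfun_range[of k \<epsilon> "u x"] by auto
      then have "\<bar>gfun k \<epsilon> (\<phi> (r m) x) - gfun k \<epsilon> (u x)\<bar> * \<bar>Du j x\<bar> \<le> 1 * \<bar>Du j x\<bar>"
        by (rule mult_right_mono) simp
      then show "norm (\<bar>gfun k \<epsilon> (\<phi> (r m) x) - gfun k \<epsilon> (u x)\<bar> * \<bar>Du j x\<bar>) \<le> \<bar>Du j x\<bar>" by simp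
    qed
  qed
  have c1: "(\<lambda>m. integral\<^sup>L M (\<lambda>x. \<bar>\<phi> (r m) x - u x\<bar>)) \<longlonglongrightarrow> 0"
    using LIMSEQ_subseq_LIMSEQ[OF conv1 r(1)] by (simp add: comp_def)
  have c2: "(\<lambda>m. integral\<^sup>L M (\<lambda>x. \<bar>d\<phi> (r m) j x - Du j x\<bar>)) \<longlonglongrightarrow> 0" for j
    using LIMSEQ_subseq_LIMSEQ[OF conv2 r(1)] by (simp add: comp_def)
  have ev1: "eventually (\<lambda>m. integral\<^sup>L M (\<lambda>x. \<bar>\<phi> (r m) x - u x\<bar>) < e) sequentially"
    using order_tendstoD(2)[OF c1 e] .
  have ev2: "eventually (\<lambda>m. \<forall>j. integral\<^sup>L M (\<lambda>x. \<bar>d\<phi> (r m) j x - Du j x\<bar>) < e) sequentially"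
    by (rule eventually_all_finite) (rule order_tendstoD(2)[OF c2 e])
  have ev3: "eventually (\<lambda>m. \<forall>j. integral\<^sup>L M (\<lambda>x. \<bar>gfun k \<epsilon> (\<phi> (r m) x) - gfun k \<epsilon> (u x)\<bar> * \<bar>Du j x\<bar>) < e) sequentially"
  proof (rule eventually_all_finite)
    fix j show "eventually (\<lambda>m. integral\<^sup>L M (\<lambda>x. \<bar>gfun k \<epsilon> (\<phi> (r m) x) - gfun k \<epsilon> (u x)\<bar> * \<bar>Du j x\<bar>) < e) sequentially"
      using order_tendstoD(2)[OF conv3[of j], of e] e by simp
  qed
  obtain N where NN: "\<And>m. m \<ge> N \<Longrightarrow> integral\<^sup>L M (\<lambda>x. \<bar>\<phi> (r m) x - u x\<bar>) < e
     \<and> (\<forall>j. integral\<^sup>L M (\<lambda>x. \<bar>d\<phi> (r m) j x - Du j x\<bar>) < e)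
     \<and> (\<forall>j. integral\<^sup>L M (\<lambda>x. \<bar>gfun k \<epsilon> (\<phi> (r m) x) - gfun k \<epsilon> (u x)\<bar> * \<bar>Du j x\<bar>) < e)"
    using eventually_conj[OF ev1 eventually_conj[OF ev2 ev3]] unfolding eventually_sequentially by blast
  show ?thesis by (rule exI[of _ "r N"]) (use NN[of N] in simp)
qed


lemma int_le:
  fixes f g :: "'a \<Rightarrow> real"
  assumes gI: "integrable M g" and fB: "f \<in> borel_measurable M"
    and f0: "\<And>x. x \<in> space M \<Longrightarrow> 0 \<le> f x" and fg: "\<And>x. x \<in> space M \<Longrightarrow> f x \<le> g x"
  shows "integrable M f" "integral\<^sup>L M f \<le> integral\<^sup>L M g"
proof -
  show fI: "integrable M f"
  proof (rule Bochner_Integration.integrable_bound[OF gI fB])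
    show "AE x in M. norm (f x) \<le> norm (g x)"
      by (rule AE_I2) (use f0 fg in \<open>fastforce\<close>)
  qed
  show "integral\<^sup>L M f \<le> integral\<^sup>L M g" by (rule integral_mono[OF fI gI fg])
qed

lemma set_lint_eq:
  assumes "\<Omega> \<in> sets lebesgue"
  shows "(LINT x:\<Omega>|lebesgue. f x) = integral\<^sup>L (lebesgue_on \<Omega>) (f :: 'a::euclidean_space \<Rightarrow> real)"
  unfolding set_lebesgue_integral_def by (rule integral_restrict_space[symmetric]) (use assms in simp)

lemma Lp1_integrable:
  assumes "Lp \<Omega> 1 u"
  shows "integrable (lebesgue_on \<Omega>) u"
proof -
  have B: "u \<in> borel_measurable (lebesgue_on \<Omega>)" and I: "integrable (lebesgue_on \<Omega>) (\<lambda>x. \<bar>u x\<bar> powr 1)"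
    using assms by (auto simp: Lp_def)
  have "integrable (lebesgue_on \<Omega>) (\<lambda>x. \<bar>u x\<bar>)" using I by simp
  then show ?thesis using integrable_abs_iff[OF B] by simp
qed

lemma cont_bdd_integrable:
  fixes g :: "real^'n \<Rightarrow> real"
  assumes \<Omega>l: "\<Omega> \<in> lmeasurable" and gc: "continuous_on UNIV g" and B: "\<And>x. \<bar>g x\<bar> \<le> B"
  shows "integrable (lebesgue_on \<Omega>) g"
proof -
  interpret F: finite_measure "lebesgue_on \<Omega>" by (rule finite_measure_lebesgue_on[OF \<Omega>l])
  have gB: "g \<in> borel_measurable (lebesgue_on \<Omega>)"
    by (rule continuous_imp_measurable_on_sets_lebesgue[OF continuous_on_subset[OF gc]]) (use \<Omega>l in auto)
  show ?thesis by (rule F.integrable_const_bound[where B=B]) (use B gB in auto)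
qed

lemma test_integrable:
  fixes \<phi> :: "real^'n \<Rightarrow> real"
  assumes \<Omega>l: "\<Omega> \<in> lmeasurable" and t: "test_fun \<Omega> \<phi>"
  shows "integrable (lebesgue_on \<Omega>) \<phi>" "integrable (lebesgue_on \<Omega>) (pder j \<phi>)"
proof -
  obtain B where B: "\<And>x. \<bar>\<phi> x\<bar> \<le> B" using test_bounded[OF t] by blast
  obtain B' where B': "\<And>x. \<bar>pder j \<phi> x\<bar> \<le> B'" using test_pder_bounded[OF t] by blast
  show "integrable (lebesgue_on \<Omega>) \<phi>" by (rule cont_bdd_integrable[OF \<Omega>l test_cont[OF t] B])
  show "integrable (lebesgue_on \<Omega>) (pder j \<phi>)" by (rule cont_bdd_integrable[OF \<Omega>l test_pder_cont[OF t] B'])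
qed

lemma W011_facts:
  fixes u :: "real^'n \<Rightarrow> real"
  assumes \<Omega>m: "\<Omega> \<in> sets lebesgue" and W: "W011 \<Omega> u Du"
  shows "integrable (lebesgue_on \<Omega>) u" "\<And>j. integrable (lebesgue_on \<Omega>) (Du j)"
    "\<exists>\<phi>. (\<forall>m. test_fun \<Omega> (\<phi> m)) \<and>
        (\<lambda>m. integral\<^sup>L (lebesgue_on \<Omega>) (\<lambda>x. \<bar>\<phi> m x - u x\<bar>)) \<longlonglongrightarrow> 0 \<and>
        (\<forall>j. (\<lambda>m. integral\<^sup>L (lebesgue_on \<Omega>) (\<lambda>x. \<bar>pder j (\<phi> m) x - Du j x\<bar>)) \<longlonglongrightarrow> 0)"
proof -
  show "integrable (lebesgue_on \<Omega>) u" using W Lp1_integrable by (auto simp: W011_def)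
  show "integrable (lebesgue_on \<Omega>) (Du j)" for j using W Lp1_integrable by (auto simp: W011_def)
  show "\<exists>\<phi>. (\<forall>m. test_fun \<Omega> (\<phi> m)) \<and>
        (\<lambda>m. integral\<^sup>L (lebesgue_on \<Omega>) (\<lambda>x. \<bar>\<phi> m x - u x\<bar>)) \<longlonglongrightarrow> 0 \<and>
        (\<forall>j. (\<lambda>m. integral\<^sup>L (lebesgue_on \<Omega>) (\<lambda>x. \<bar>pder j (\<phi> m) x - Du j x\<bar>)) \<longlonglongrightarrow> 0)"
    using W unfolding W011_def set_lint_eq[OF \<Omega>m] by blast
qed

lemma deriv_split:
  fixes a gf gu ind d D \<delta> :: real
  assumes "\<bar>a - gf\<bar> \<le> \<delta>" "0 \<le> gf" "gf \<le> 1"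
  shows "\<bar>a * d - ind * D\<bar> \<le> \<delta> * \<bar>d\<bar> + \<bar>d - D\<bar> + \<bar>gf - gu\<bar> * \<bar>D\<bar> + \<bar>gu - ind\<bar> * \<bar>D\<bar>"
proof -
  have eq: "a * d - ind * D = (a - gf) * d + gf * (d - D) + (gf - gu) * D + (gu - ind) * D"
    by (simp add: algebra_simps)
  have "\<bar>a * d - ind * D\<bar> \<le> \<bar>(a - gf) * d\<bar> + \<bar>gf * (d - D)\<bar> + \<bar>(gf - gu) * D\<bar> + \<bar>(gu - ind) * D\<bar>"
    unfolding eq by (smt (verit) abs_triangle_ineq)
  also have "\<bar>(a - gf) * d\<bar> \<le> \<delta> * \<bar>d\<bar>" unfolding abs_mult by (rule mult_right_mono[OF assms(1)]) simp
  also have "\<bar>gf * (d - D)\<bar> \<le> \<bar>d - D\<bar>"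
  proof -
    have "\<bar>gf\<bar> * \<bar>d - D\<bar> \<le> 1 * \<bar>d - D\<bar>" by (rule mult_right_mono) (use assms in auto)
    then show ?thesis by (simp add: abs_mult)
  qed
  finally show ?thesis by (simp add: abs_mult)
qed


lemma approx_trunc:
  fixes u :: "real^'n \<Rightarrow> real" and Du :: "'n \<Rightarrow> real^'n \<Rightarrow> real"
  assumes \<Omega>o: "open \<Omega>" and \<Omega>b: "bounded \<Omega>" and W: "W011 \<Omega> u Du" and k: "k > 0" and e: "e > 0"
  shows "\<exists>\<psi>. test_fun \<Omega> \<psi> \<and> integral\<^sup>L (lebesgue_on \<Omega>) (\<lambda>x. \<bar>\<psi> x - trunc k (u x)\<bar>) < e
           \<and> (\<forall>j. integral\<^sup>L (lebesgue_on \<Omega>) (\<lambda>x. \<bar>pder j \<psi> x - (if \<bar>u x\<bar> \<le> k then Du j x else 0)\<bar>) < e)"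
proof -
  let ?M = "lebesgue_on \<Omega>"
  have \<Omega>l: "\<Omega> \<in> lmeasurable" using lmeasurable_open[OF \<Omega>b \<Omega>o] .
  have \<Omega>m: "\<Omega> \<in> sets lebesgue" using \<Omega>l by (rule fmeasurableD)
  interpret F: finite_measure ?M by (rule finite_measure_lebesgue_on[OF \<Omega>l])
  have fin: "finite_measure ?M" by (rule finite_measure_lebesgue_on[OF \<Omega>l])
  have uI: "integrable ?M u" and DuI: "\<And>j. integrable ?M (Du j)" using W011_facts[OF \<Omega>m W] by auto
  obtain \<phi> where \<phi>t: "\<And>m. test_fun \<Omega> (\<phi> m)"
    and conv1: "(\<lambda>m. integral\<^sup>L ?M (\<lambda>x. \<bar>\<phi> m x - u x\<bar>)) \<longlonglongrightarrow> 0"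
    and conv2: "\<And>j. (\<lambda>m. integral\<^sup>L ?M (\<lambda>x. \<bar>pder j (\<phi> m) x - Du j x\<bar>)) \<longlonglongrightarrow> 0"
    using W011_facts(3)[OF \<Omega>m W] by blast
  have uB: "u \<in> borel_measurable ?M" using uI by (rule borel_measurable_integrable)
  have DuB: "Du j \<in> borel_measurable ?M" for j using DuI by (rule borel_measurable_integrable)
  define e4 where "e4 = e / 4"
  have e4: "e4 > 0" using e by (simp add: e4_def)
  obtain \<epsilon> where ep: "\<epsilon> > 0"
    and A1: "\<And>j. integral\<^sup>L ?M (\<lambda>x. \<bar>gfun k \<epsilon> (u x) - (if \<bar>u x\<bar> \<le> k then 1 else 0)\<bar> * \<bar>Du j x\<bar>) < e4"
    and A2: "\<epsilon> * measure ?M (space ?M) < e4"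
    using step1[where Du=Du and u=u, OF fin k e4 uB DuI] by blast
  have \<phi>I: "\<And>m. integrable ?M (\<phi> m)" using test_integrable(1)[OF \<Omega>l \<phi>t] .
  obtain m where B1: "integral\<^sup>L ?M (\<lambda>x. \<bar>\<phi> m x - u x\<bar>) < e4"
    and B2: "\<And>j. integral\<^sup>L ?M (\<lambda>x. \<bar>pder j (\<phi> m) x - Du j x\<bar>) < e4"
    and B3: "\<And>j. integral\<^sup>L ?M (\<lambda>x. \<bar>gfun k \<epsilon> (\<phi> m x) - gfun k \<epsilon> (u x)\<bar> * \<bar>Du j x\<bar>) < e4"
    using step2[of ?M \<phi> u Du "\<lambda>m j. pder j (\<phi> m)", OF \<phi>I uI DuI conv1 conv2 ep e4, of k] by blast
  define f where "f = \<phi> m"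
  have ft: "test_fun \<Omega> f" using \<phi>t by (simp add: f_def)
  obtain Bf where Bf: "\<And>x. \<bar>f x\<bar> \<le> Bf" using test_bounded[OF ft] by blast
  have fI: "integrable ?M f" and dfI: "\<And>j. integrable ?M (pder j f)" using test_integrable[OF \<Omega>l ft] by auto
  have fc: "continuous_on UNIV f" and dfc: "\<And>j. continuous_on UNIV (pder j f)"
    using test_cont[OF ft] test_pder_cont[OF ft] by auto
  have fB: "f \<in> borel_measurable ?M" using fI by (rule borel_measurable_integrable)
  have dfB: "pder j f \<in> borel_measurable ?M" for j using dfI by (rule borel_measurable_integrable)
  define Af where "Af = integral\<^sup>L ?M (\<lambda>x. \<bar>f x\<bar>)"
  define Aj where "Aj j = integral\<^sup>L ?M (\<lambda>x. \<bar>pder j f x\<bar>)" for j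
  have Af0: "Af \<ge> 0" unfolding Af_def by (rule integral_nonneg_AE) simp
  have Aj0: "Aj j \<ge> 0" for j unfolding Aj_def by (rule integral_nonneg_AE) simp
  define S where "S = Af + (\<Sum>j\<in>UNIV. Aj j) + 1"
  have AjS: "Aj j \<le> (\<Sum>j\<in>UNIV. Aj j)" for j
    by (rule member_le_sum) (use Aj0 in auto)
  have S1: "S \<ge> 1" unfolding S_def using Af0 sum_nonneg[of UNIV Aj] Aj0 by simp
  define \<delta> where "\<delta> = e4 / (2 * S)"
  have dpos: "\<delta> > 0" using e4 S1 by (simp add: \<delta>_def)
  have dAf: "\<delta> * Af < e4"
  proof -
    have "\<delta> * Af \<le> \<delta> * S" using dpos AjS[of undefined] Af0 Aj0 S_def sum_nonneg[of UNIV Aj]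
      by (intro mult_left_mono) (auto simp: S_def)
    also have "\<delta> * S = e4 / 2" using S1 by (simp add: \<delta>_def)
    finally show ?thesis using e4 by simp
  qed
  have dAj: "\<delta> * Aj j < e4" for j
  proof -
    have "\<delta> * Aj j \<le> \<delta> * S" using dpos AjS[of j] Af0
      by (intro mult_left_mono) (auto simp: S_def)
    also have "\<delta> * S = e4 / 2" using S1 by (simp add: \<delta>_def)
    finally show ?thesis using e4 by simp
  qed
  obtain c N where H: "\<And>s. \<bar>s\<bar> \<le> Bf \<Longrightarrow> \<bar>polyQ' c N s - gfun k \<epsilon> s\<bar> \<le> \<delta>"
    using step3[OF ep dpos, of Bf k] by blast
  define \<psi> where "\<psi> = (\<lambda>x. polyQ c N (f x))"
  have \<psi>t: "test_fun \<Omega> \<psi>" unfolding \<psi>_def by (rule test_polyQ[OF ft])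
  have \<psi>B: "\<psi> \<in> borel_measurable ?M" using test_integrable(1)[OF \<Omega>l \<psi>t] by (rule borel_measurable_integrable)
  have d\<psi>B: "pder j \<psi> \<in> borel_measurable ?M" for j using test_integrable(2)[OF \<Omega>l \<psi>t] by (rule borel_measurable_integrable)
  have dpsi: "pder j \<psi> x = polyQ' c N (f x) * pder j f x" for j x
    unfolding \<psi>_def by (rule pder_polyQ[OF ft])
  have P1: "\<bar>\<psi> x - trunc k (u x)\<bar> \<le> \<delta> * \<bar>f x\<bar> + \<epsilon> + \<bar>f x - u x\<bar>" for x
  proof -
    have "\<bar>polyQ c N (f x) - trunc k (f x)\<bar> \<le> \<delta> * \<bar>f x\<bar> + \<epsilon>"
      by (rule full_bound[OF polyQ_deriv polyQ_0 k ep H Bf])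
    moreover have "\<bar>trunc k (f x) - trunc k (u x)\<bar> \<le> \<bar>f x - u x\<bar>" by (rule trunc_lip)
    ultimately show ?thesis unfolding \<psi>_def by linarith
  qed
  have RI1: "integrable ?M (\<lambda>x. \<delta> * \<bar>f x\<bar> + \<epsilon> + \<bar>f x - u x\<bar>)"
    using fI uI by (intro Bochner_Integration.integrable_add integrable_mult_right integrable_abs
        F.integrable_const Bochner_Integration.integrable_diff)
  have val: "integral\<^sup>L ?M (\<lambda>x. \<bar>\<psi> x - trunc k (u x)\<bar>) < e"
  proof -
    have "integral\<^sup>L ?M (\<lambda>x. \<bar>\<psi> x - trunc k (u x)\<bar>) \<le> integral\<^sup>L ?M (\<lambda>x. \<delta> * \<bar>f x\<bar> + \<epsilon> + \<bar>f x - u x\<bar>)"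
    proof (rule int_le(2)[OF RI1])
      show "(\<lambda>x. \<bar>\<psi> x - trunc k (u x)\<bar>) \<in> borel_measurable ?M"
        unfolding trunc_def using \<psi>B uB by measurable
    qed (use P1 in auto)
    also have "\<dots> = \<delta> * Af + \<epsilon> * measure ?M (space ?M) + integral\<^sup>L ?M (\<lambda>x. \<bar>f x - u x\<bar>)"
    proof -
      have i1: "integrable ?M (\<lambda>x. \<delta> * \<bar>f x\<bar>)" using fI by (intro integrable_mult_right integrable_abs)
      have i2: "integrable ?M (\<lambda>x. \<bar>f x - u x\<bar>)" using fI uI by (intro integrable_abs Bochner_Integration.integrable_diff)
      have "integral\<^sup>L ?M (\<lambda>x. \<delta> * \<bar>f x\<bar> + \<epsilon> + \<bar>f x - u x\<bar>)
          = integral\<^sup>L ?M (\<lambda>x. \<delta> * \<bar>f x\<bar> + \<epsilon>) + integral\<^sup>L ?M (\<lambda>x. \<bar>f x - u x\<bar>)"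
        by (rule Bochner_Integration.integral_add[OF Bochner_Integration.integrable_add[OF i1 F.integrable_const] i2])
      also have "integral\<^sup>L ?M (\<lambda>x. \<delta> * \<bar>f x\<bar> + \<epsilon>) = integral\<^sup>L ?M (\<lambda>x. \<delta> * \<bar>f x\<bar>) + integral\<^sup>L ?M (\<lambda>x. \<epsilon>)"
        by (rule Bochner_Integration.integral_add[OF i1 F.integrable_const])
      also have "integral\<^sup>L ?M (\<lambda>x. \<delta> * \<bar>f x\<bar>) = \<delta> * Af" unfolding Af_def by (rule integral_mult_right_zero)
      also have "integral\<^sup>L ?M (\<lambda>x. \<epsilon>) = \<epsilon> * measure ?M (space ?M)" by (simp add: mult.commute)
      finally show ?thesis unfolding f_def by simp
    qed
    also have "\<dots> < e4 + e4 + e4" using dAf A2 B1 unfolding f_def by linarith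
    finally show ?thesis unfolding e4_def using e by linarith
  qed
  have der: "integral\<^sup>L ?M (\<lambda>x. \<bar>pder j \<psi> x - (if \<bar>u x\<bar> \<le> k then Du j x else 0)\<bar>) < e" for j
  proof -
    let ?ind = "\<lambda>x. (if \<bar>u x\<bar> \<le> k then 1 else 0) :: real"
    let ?R = "\<lambda>x. \<delta> * \<bar>pder j f x\<bar> + \<bar>pder j f x - Du j x\<bar> + \<bar>gfun k \<epsilon> (f x) - gfun k \<epsilon> (u x)\<bar> * \<bar>Du j x\<bar>
                 + \<bar>gfun k \<epsilon> (u x) - ?ind x\<bar> * \<bar>Du j x\<bar>"
    have P2: "\<bar>pder j \<psi> x - (if \<bar>u x\<bar> \<le> k then Du j x else 0)\<bar> \<le> ?R x" for x
    proof -
      have "(if \<bar>u x\<bar> \<le> k then Du j x else 0) = ?ind x * Du j x" by simp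
      then have "\<bar>pder j \<psi> x - (if \<bar>u x\<bar> \<le> k then Du j x else 0)\<bar>
           = \<bar>polyQ' c N (f x) * pder j f x - ?ind x * Du j x\<bar>" by (simp add: dpsi)
      also have "\<dots> \<le> ?R x"
        by (rule deriv_split[OF H[OF Bf] gfun_range])
      finally show ?thesis .
    qed
    have gB1: "(\<lambda>x. \<bar>gfun k \<epsilon> (f x) - gfun k \<epsilon> (u x)\<bar> * \<bar>Du j x\<bar>) \<in> borel_measurable ?M"
      unfolding gfun_def using fB uB DuB by measurable
    have gB2: "(\<lambda>x. \<bar>gfun k \<epsilon> (u x) - ?ind x\<bar> * \<bar>Du j x\<bar>) \<in> borel_measurable ?M"
      unfolding gfun_def using uB DuB by measurable
    have bnd1: "\<bar>gfun k \<epsilon> (f x) - gfun k \<epsilon> (u x)\<bar> * \<bar>Du j x\<bar> \<le> \<bar>Du j x\<bar>" for x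
    proof -
      have "\<bar>gfun k \<epsilon> (f x) - gfun k \<epsilon> (u x)\<bar> \<le> 1"
        using gfun_range[of k \<epsilon> "f x"] gfun_range[of k \<epsilon> "u x"] by auto
      then show ?thesis using mult_right_mono[of _ 1 "\<bar>Du j x\<bar>"] by simp
    qed
    have bnd2: "\<bar>gfun k \<epsilon> (u x) - ?ind x\<bar> * \<bar>Du j x\<bar> \<le> \<bar>Du j x\<bar>" for x
      using mult_right_mono[OF gfun_ind_bound[of k \<epsilon> "u x"], of "\<bar>Du j x\<bar>"] by simp
    have i1: "integrable ?M (\<lambda>x. \<delta> * \<bar>pder j f x\<bar>)" using dfI by (intro integrable_mult_right integrable_abs)
    have i2: "integrable ?M (\<lambda>x. \<bar>pder j f x - Du j x\<bar>)" using dfI DuI by (intro integrable_abs Bochner_Integration.integrable_diff)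
    have i3: "integrable ?M (\<lambda>x. \<bar>gfun k \<epsilon> (f x) - gfun k \<epsilon> (u x)\<bar> * \<bar>Du j x\<bar>)"
      by (rule int_le(1)[OF integrable_abs[OF DuI[of j]] gB1]) (use bnd1 in auto)
    have i4: "integrable ?M (\<lambda>x. \<bar>gfun k \<epsilon> (u x) - ?ind x\<bar> * \<bar>Du j x\<bar>)"
      by (rule int_le(1)[OF integrable_abs[OF DuI[of j]] gB2]) (use bnd2 in auto)
    have RI: "integrable ?M ?R"
      by (intro Bochner_Integration.integrable_add i1 i2 i3 i4)
    have "integral\<^sup>L ?M (\<lambda>x. \<bar>pder j \<psi> x - (if \<bar>u x\<bar> \<le> k then Du j x else 0)\<bar>) \<le> integral\<^sup>L ?M ?R"
    proof (rule int_le(2)[OF RI])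
      show "(\<lambda>x. \<bar>pder j \<psi> x - (if \<bar>u x\<bar> \<le> k then Du j x else 0)\<bar>) \<in> borel_measurable ?M"
        using d\<psi>B[of j] uB DuB[of j] by measurable
    qed (use P2 in auto)
    also have "integral\<^sup>L ?M ?R = \<delta> * Aj j + integral\<^sup>L ?M (\<lambda>x. \<bar>pder j f x - Du j x\<bar>)
        + integral\<^sup>L ?M (\<lambda>x. \<bar>gfun k \<epsilon> (f x) - gfun k \<epsilon> (u x)\<bar> * \<bar>Du j x\<bar>)
        + integral\<^sup>L ?M (\<lambda>x. \<bar>gfun k \<epsilon> (u x) - ?ind x\<bar> * \<bar>Du j x\<bar>)"
      using i1 i2 i3 i4 by (simp add: Aj_def)
    also have "\<dots> < e4 + e4 + e4 + e4"
      using dAj[of j] B2[of j] B3[of j] A1[of j] unfolding f_def by linarith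
    finally show ?thesis unfolding e4_def using e by linarith
  qed
  show ?thesis using \<psi>t val der by blast
qed


lemma loc_int:
  fixes f :: "real^'n \<Rightarrow> real"
  assumes \<Omega>m: "\<Omega> \<in> sets lebesgue" and fI: "integrable (lebesgue_on \<Omega>) f"
  shows "loc_integrable \<Omega> f"
  unfolding loc_integrable_def
proof (intro allI impI)
  fix K :: "(real^'n) set" assume K: "compact K \<and> K \<subseteq> \<Omega>"
  have Km: "K \<in> sets lebesgue" using K by (simp add: compact_imp_closed borel_closed)
  have "integrable lebesgue (\<lambda>x. indicator \<Omega> x *\<^sub>R f x)"
    using fI by (subst (asm) integrable_restrict_space) (use \<Omega>m in simp_all)
  then have "integrable lebesgue (\<lambda>x. indicator K x *\<^sub>R (indicator \<Omega> x *\<^sub>R f x))"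
    by (rule integrable_mult_indicator[OF Km])
  moreover have "(\<lambda>x. indicator K x *\<^sub>R (indicator \<Omega> x *\<^sub>R f x)) = (\<lambda>x. indicator K x *\<^sub>R f x)"
    using K by (auto simp: indicator_def fun_eq_iff)
  ultimately show "set_integrable lebesgue K f" unfolding set_integrable_def by simp
qed

lemma int_mult_bdd:
  fixes f h :: "'a \<Rightarrow> real"
  assumes fI: "integrable M f" and hB: "h \<in> borel_measurable M" and B: "\<And>x. \<bar>h x\<bar> \<le> B"
  shows "integrable M (\<lambda>x. f x * h x)"
proof (rule Bochner_Integration.integrable_bound[OF integrable_mult_right[where c=B, OF integrable_abs[OF fI]]])
  show "(\<lambda>x. f x * h x) \<in> borel_measurable M" using borel_measurable_integrable[OF fI] hB by measurable
  show "AE x in M. norm (f x * h x) \<le> norm (B * \<bar>f x\<bar>)"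
  proof (rule AE_I2)
    fix x
    have "\<bar>f x\<bar> * \<bar>h x\<bar> \<le> \<bar>f x\<bar> * B" by (rule mult_left_mono[OF B]) simp
    moreover have "B \<ge> 0" using B[of x] by linarith
    ultimately show "norm (f x * h x) \<le> norm (B * \<bar>f x\<bar>)" by (simp add: abs_mult mult.commute)
  qed
qed

lemma int_diff_bound:
  fixes f g h :: "'a \<Rightarrow> real"
  assumes fI: "integrable M f" and gI: "integrable M g" and hB: "h \<in> borel_measurable M" and B: "\<And>x. \<bar>h x\<bar> \<le> B"
  shows "\<bar>integral\<^sup>L M (\<lambda>x. f x * h x) - integral\<^sup>L M (\<lambda>x. g x * h x)\<bar> \<le> B * integral\<^sup>L M (\<lambda>x. \<bar>f x - g x\<bar>)"
proof -
  have i1: "integrable M (\<lambda>x. f x * h x)" by (rule int_mult_bdd[OF fI hB B])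
  have i2: "integrable M (\<lambda>x. g x * h x)" by (rule int_mult_bdd[OF gI hB B])
  have dI: "integrable M (\<lambda>x. f x - g x)" by (rule Bochner_Integration.integrable_diff[OF fI gI])
  have "integral\<^sup>L M (\<lambda>x. f x * h x) - integral\<^sup>L M (\<lambda>x. g x * h x) = integral\<^sup>L M (\<lambda>x. (f x - g x) * h x)"
    using i1 i2 by (simp add: left_diff_distrib)
  also have "\<bar>\<dots>\<bar> \<le> integral\<^sup>L M (\<lambda>x. \<bar>(f x - g x) * h x\<bar>)" by (rule integral_abs_bound)
  also have "\<dots> \<le> integral\<^sup>L M (\<lambda>x. B * \<bar>f x - g x\<bar>)"
  proof (rule int_le(2))
    show "integrable M (\<lambda>x. B * \<bar>f x - g x\<bar>)" using dI by (intro integrable_mult_right integrable_abs)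
    show "(\<lambda>x. \<bar>(f x - g x) * h x\<bar>) \<in> borel_measurable M"
      using borel_measurable_integrable[OF fI] borel_measurable_integrable[OF gI] hB by measurable
    fix x
    show "0 \<le> \<bar>(f x - g x) * h x\<bar>" by simp
    have "\<bar>f x - g x\<bar> * \<bar>h x\<bar> \<le> \<bar>f x - g x\<bar> * B" by (rule mult_left_mono[OF B]) simp
    then show "\<bar>(f x - g x) * h x\<bar> \<le> B * \<bar>f x - g x\<bar>" by (simp add: abs_mult mult.commute)
  qed
  also have "\<dots> = B * integral\<^sup>L M (\<lambda>x. \<bar>f x - g x\<bar>)" by simp
  finally show ?thesis .
qed

lemma trunc_W01p:
  fixes u :: "real^'n \<Rightarrow> real" and Du :: "'n \<Rightarrow> real^'n \<Rightarrow> real"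
  assumes \<Omega>o: "open \<Omega>" and \<Omega>b: "bounded \<Omega>" and W: "W01p \<Omega> p u Du" and k: "k > 0"
  shows "W01p \<Omega> p (\<lambda>x. trunc k (u x)) (\<lambda>j x. if \<bar>u x\<bar> \<le> k then Du j x else 0)"
proof -
  let ?M = "lebesgue_on \<Omega>"
  let ?v = "\<lambda>x. trunc k (u x)"
  let ?G = "\<lambda>j x. if \<bar>u x\<bar> \<le> k then Du j x else 0"
  have \<Omega>l: "\<Omega> \<in> lmeasurable" using lmeasurable_open[OF \<Omega>b \<Omega>o] .
  have \<Omega>m: "\<Omega> \<in> sets lebesgue" using \<Omega>l by (rule fmeasurableD)
  have W1: "W011 \<Omega> u Du" using W by (simp add: W01p_def)
  have uI: "integrable ?M u" and DuI: "\<And>j. integrable ?M (Du j)" using W011_facts[OF \<Omega>m W1] by auto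
  have uB: "u \<in> borel_measurable ?M" using uI by (rule borel_measurable_integrable)
  have DuB: "Du j \<in> borel_measurable ?M" for j using DuI by (rule borel_measurable_integrable)
  have vB: "?v \<in> borel_measurable ?M" unfolding trunc_def using uB by measurable
  have GB: "?G j \<in> borel_measurable ?M" for j using uB DuB[of j] by measurable
  have vI: "integrable ?M ?v"
  proof (rule Bochner_Integration.integrable_bound[OF integrable_abs[OF uI] vB])
    show "AE x in ?M. norm (trunc k (u x)) \<le> norm \<bar>u x\<bar>" using trunc_abs_le(1)[OF k] by simp
  qed
  have GI: "integrable ?M (?G j)" for j
  proof (rule Bochner_Integration.integrable_bound[OF DuI[of j] GB])
    show "AE x in ?M. norm (?G j x) \<le> norm (Du j x)" by simp
  qed
  have Lpv: "Lp \<Omega> 1 ?v" unfolding Lp_def using vB vI integrable_abs[OF vI] by simp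
  have LpG: "Lp \<Omega> 1 (?G j)" for j unfolding Lp_def using GB GI integrable_abs[OF GI] by simp
  have LppG: "Lp \<Omega> (p j) (?G j)" for j
  proof -
    have I: "integrable ?M (\<lambda>x. \<bar>Du j x\<bar> powr p j)" using W by (auto simp: W01p_def Lp_def)
    have "integrable ?M (\<lambda>x. \<bar>?G j x\<bar> powr p j)"
    proof (rule Bochner_Integration.integrable_bound[OF I])
      show "(\<lambda>x. \<bar>?G j x\<bar> powr p j) \<in> borel_measurable ?M" using GB[of j] by measurable
      show "AE x in ?M. norm (\<bar>?G j x\<bar> powr p j) \<le> norm (\<bar>Du j x\<bar> powr p j)" by simp
    qed
    then show ?thesis unfolding Lp_def using GB by simp
  qed
  have ex: "\<forall>m. \<exists>\<psi>. test_fun \<Omega> \<psi> \<and> integral\<^sup>L ?M (\<lambda>x. \<bar>\<psi> x - ?v x\<bar>) < inverse (real (Suc m))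
           \<and> (\<forall>j. integral\<^sup>L ?M (\<lambda>x. \<bar>pder j \<psi> x - ?G j x\<bar>) < inverse (real (Suc m)))"
  proof
    fix m :: nat
    have "inverse (real (Suc m)) > 0" by simp
    from approx_trunc[OF \<Omega>o \<Omega>b W1 k this]
    show "\<exists>\<psi>. test_fun \<Omega> \<psi> \<and> integral\<^sup>L ?M (\<lambda>x. \<bar>\<psi> x - ?v x\<bar>) < inverse (real (Suc m))
           \<and> (\<forall>j. integral\<^sup>L ?M (\<lambda>x. \<bar>pder j \<psi> x - ?G j x\<bar>) < inverse (real (Suc m)))" .
  qed
  from choice[OF ex] obtain \<Psi> where \<Psi>all: "\<forall>m. test_fun \<Omega> (\<Psi> m) \<and> integral\<^sup>L ?M (\<lambda>x. \<bar>\<Psi> m x - ?v x\<bar>) < inverse (real (Suc m))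
           \<and> (\<forall>j. integral\<^sup>L ?M (\<lambda>x. \<bar>pder j (\<Psi> m) x - ?G j x\<bar>) < inverse (real (Suc m)))"
    by (rule exE)
  have \<Psi>: "\<And>m. test_fun \<Omega> (\<Psi> m)"
    "\<And>m. integral\<^sup>L ?M (\<lambda>x. \<bar>\<Psi> m x - ?v x\<bar>) < inverse (real (Suc m))"
    "\<And>m j. integral\<^sup>L ?M (\<lambda>x. \<bar>pder j (\<Psi> m) x - ?G j x\<bar>) < inverse (real (Suc m))"
    using \<Psi>all by blast+
  have conv1: "(\<lambda>m. integral\<^sup>L ?M (\<lambda>x. \<bar>\<Psi> m x - ?v x\<bar>)) \<longlonglongrightarrow> 0"
  proof (rule tendsto_sandwich[OF _ _ tendsto_const LIMSEQ_inverse_real_of_nat])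
    show "\<forall>\<^sub>F m in sequentially. 0 \<le> integral\<^sup>L ?M (\<lambda>x. \<bar>\<Psi> m x - ?v x\<bar>)" by (simp add: integral_nonneg_AE)
    show "\<forall>\<^sub>F m in sequentially. integral\<^sup>L ?M (\<lambda>x. \<bar>\<Psi> m x - ?v x\<bar>) \<le> inverse (real (Suc m))"
      using \<Psi>(2) by (simp add: less_imp_le)
  qed
  have conv2: "(\<lambda>m. integral\<^sup>L ?M (\<lambda>x. \<bar>pder j (\<Psi> m) x - ?G j x\<bar>)) \<longlonglongrightarrow> 0" for j
  proof (rule tendsto_sandwich[OF _ _ tendsto_const LIMSEQ_inverse_real_of_nat])
    show "\<forall>\<^sub>F m in sequentially. 0 \<le> integral\<^sup>L ?M (\<lambda>x. \<bar>pder j (\<Psi> m) x - ?G j x\<bar>)" by (simp add: integral_nonneg_AE)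
    show "\<forall>\<^sub>F m in sequentially. integral\<^sup>L ?M (\<lambda>x. \<bar>pder j (\<Psi> m) x - ?G j x\<bar>) \<le> inverse (real (Suc m))"
      using \<Psi>(3) by (simp add: less_imp_le)
  qed
  have weak: "weak_pderiv \<Omega> j ?v (?G j)" for j
    unfolding weak_pderiv_def
  proof (intro conjI allI impI)
    show "loc_integrable \<Omega> ?v" by (rule loc_int[OF \<Omega>m vI])
    show "loc_integrable \<Omega> (?G j)" by (rule loc_int[OF \<Omega>m GI])
    fix \<eta> assume \<eta>: "test_fun \<Omega> \<eta>"
    obtain B1 where B1: "\<And>x. \<bar>\<eta> x\<bar> \<le> B1" using test_bounded[OF \<eta>] by blast
    obtain B2 where B2: "\<And>x. \<bar>pder j \<eta> x\<bar> \<le> B2" using test_pder_bounded[OF \<eta>] by blast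
    have \<eta>B: "\<eta> \<in> borel_measurable ?M" using test_integrable(1)[OF \<Omega>l \<eta>] by (rule borel_measurable_integrable)
    have d\<eta>B: "pder j \<eta> \<in> borel_measurable ?M" using test_integrable(2)[OF \<Omega>l \<eta>] by (rule borel_measurable_integrable)
    let ?X = "integral\<^sup>L ?M (\<lambda>x. ?v x * pder j \<eta> x) + integral\<^sup>L ?M (\<lambda>x. ?G j x * \<eta> x)"
    have bnd: "\<bar>?X\<bar> \<le> (B1 + B2) * inverse (real (Suc m))" for m
    proof -
      have \<Psi>I: "integrable ?M (\<Psi> m)" using test_integrable(1)[OF \<Omega>l \<Psi>(1)] .
      have d\<Psi>I: "integrable ?M (pder j (\<Psi> m))" using test_integrable(2)[OF \<Omega>l \<Psi>(1)] .
      have a: "\<bar>integral\<^sup>L ?M (\<lambda>x. ?v x * pder j \<eta> x) - integral\<^sup>L ?M (\<lambda>x. \<Psi> m x * pder j \<eta> x)\<bar>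
             \<le> B2 * integral\<^sup>L ?M (\<lambda>x. \<bar>?v x - \<Psi> m x\<bar>)"
        by (rule int_diff_bound[OF vI \<Psi>I d\<eta>B B2])
      have b: "\<bar>integral\<^sup>L ?M (\<lambda>x. ?G j x * \<eta> x) - integral\<^sup>L ?M (\<lambda>x. pder j (\<Psi> m) x * \<eta> x)\<bar>
             \<le> B1 * integral\<^sup>L ?M (\<lambda>x. \<bar>?G j x - pder j (\<Psi> m) x\<bar>)"
        by (rule int_diff_bound[OF GI d\<Psi>I \<eta>B B1])
      have c: "integral\<^sup>L ?M (\<lambda>x. \<Psi> m x * pder j \<eta> x) = - integral\<^sup>L ?M (\<lambda>x. pder j (\<Psi> m) x * \<eta> x)"
        by (rule ibp_test[OF \<Omega>m \<Psi>(1) \<eta>])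
      have e1: "integral\<^sup>L ?M (\<lambda>x. \<bar>?v x - \<Psi> m x\<bar>) \<le> inverse (real (Suc m))"
        using \<Psi>(2)[of m] by (simp add: abs_minus_commute)
      have e2: "integral\<^sup>L ?M (\<lambda>x. \<bar>?G j x - pder j (\<Psi> m) x\<bar>) \<le> inverse (real (Suc m))"
        using \<Psi>(3)[of j m] by (simp add: abs_minus_commute)
      have B1p: "B1 \<ge> 0" using B1[of undefined] by linarith
      have B2p: "B2 \<ge> 0" using B2[of undefined] by linarith
      have "B2 * integral\<^sup>L ?M (\<lambda>x. \<bar>?v x - \<Psi> m x\<bar>) \<le> B2 * inverse (real (Suc m))"
        by (rule mult_left_mono[OF e1 B2p])
      moreover have "B1 * integral\<^sup>L ?M (\<lambda>x. \<bar>?G j x - pder j (\<Psi> m) x\<bar>) \<le> B1 * inverse (real (Suc m))"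
        by (rule mult_left_mono[OF e2 B1p])
      ultimately show ?thesis using a b c by (simp only: abs_le_iff distrib_right) linarith
    qed
    have "?X = 0"
    proof (rule ccontr)
      assume "?X \<noteq> 0"
      then have pos: "\<bar>?X\<bar> > 0" by simp
      have "(\<lambda>m. (B1 + B2) * inverse (real (Suc m))) \<longlonglongrightarrow> (B1 + B2) * 0"
        by (intro tendsto_intros LIMSEQ_inverse_real_of_nat)
      then have "(\<lambda>m. (B1 + B2) * inverse (real (Suc m))) \<longlonglongrightarrow> 0" by simp
      from order_tendstoD(2)[OF this pos] obtain N where "\<And>m. m \<ge> N \<Longrightarrow> (B1 + B2) * inverse (real (Suc m)) < \<bar>?X\<bar>"
        unfolding eventually_sequentially by blast
      then obtain m where "(B1 + B2) * inverse (real (Suc m)) < \<bar>?X\<bar>" by blast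
      with bnd[of m] show False by simp
    qed
    then show "(LINT x:\<Omega>|lebesgue. ?v x * pder j \<eta> x) = - (LINT x:\<Omega>|lebesgue. ?G j x * \<eta> x)"
      unfolding set_lint_eq[OF \<Omega>m] by simp
  qed
  have W011v: "W011 \<Omega> ?v ?G"
    unfolding W011_def
  proof (intro conjI allI)
    show "Lp \<Omega> 1 ?v" by (rule Lpv)
    fix j
    show "Lp \<Omega> 1 (?G j)" by (rule LpG)
    show "weak_pderiv \<Omega> j ?v (?G j)" by (rule weak)
  next
    show "\<exists>\<phi>. (\<forall>m. test_fun \<Omega> (\<phi> m)) \<and>
        (\<lambda>m. LINT x:\<Omega>|lebesgue. \<bar>\<phi> m x - ?v x\<bar>) \<longlonglongrightarrow> 0 \<and>
        (\<forall>j. (\<lambda>m. LINT x:\<Omega>|lebesgue. \<bar>pder j (\<phi> m) x - ?G j x\<bar>) \<longlonglongrightarrow> 0)"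
      unfolding set_lint_eq[OF \<Omega>m] using \<Psi>(1) conv1 conv2 by blast
  qed
  show ?thesis unfolding W01p_def using W011v LppG by blast
qed


lemma powr_sq:
  fixes d p :: real
  assumes "p \<ge> 2"
  shows "\<bar>d\<bar> powr (p - 2) * d * d = \<bar>d\<bar> powr p"
proof (cases "d = 0")
  case True then show ?thesis by simp
next
  case False
  have e1: "\<bar>d\<bar> powr 2 = \<bar>d\<bar> * \<bar>d\<bar>" using False by (simp add: powr_numeral power2_eq_square)
  have dd: "d * d = \<bar>d\<bar> powr 2" unfolding e1 by (rule abs_mult_self_eq[symmetric])
  have "\<bar>d\<bar> powr (p - 2) * d * d = \<bar>d\<bar> powr (p - 2) * (d * d)" by (rule mult.assoc)
  also have "\<dots> = \<bar>d\<bar> powr (p - 2) * \<bar>d\<bar> powr 2" by (simp only: dd)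
  also have "\<dots> = \<bar>d\<bar> powr ((p - 2) + 2)" by (rule powr_add[symmetric])
  also have "\<dots> = \<bar>d\<bar> powr p" by simp
  finally show ?thesis .
qed

lemma A_eq:
  fixes A d p s t :: real
  assumes "p \<ge> 2"
  shows "A * \<bar>d\<bar> powr (p - 2) * d * (if \<bar>t\<bar> \<le> s then d else 0)
       = A * \<bar>if \<bar>t\<bar> \<le> s then d else 0\<bar> powr p"
proof (cases "\<bar>t\<bar> \<le> s")
  case True
  have "A * \<bar>d\<bar> powr (p - 2) * d * d = A * (\<bar>d\<bar> powr (p - 2) * d * d)" by (simp add: mult.assoc)
  then show ?thesis using True powr_sq[OF assms, of d] by simp
next
  case False then show ?thesis by simp
qed

lemma trunc_nonneg_facts:
  assumes s: "s > 0" and t: "t \<ge> 0"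
  shows "0 \<le> trunc s t" "trunc s t \<le> s" "trunc s t \<le> t"
  using s t by (auto simp: trunc_def)

lemma r_formula:
  assumes c: "c > 0"
  shows "t \<ge> 0 \<Longrightarrow> c * trunc (inverse c) t = min (c * t) 1"
    and "t < 0 \<Longrightarrow> c * trunc (inverse c) t \<le> 0"
proof -
  assume t: "t \<ge> 0"
  show "c * trunc (inverse c) t = min (c * t) 1"
  proof (cases "t \<le> inverse c")
    case True
    then have "c * t \<le> 1" using c by (simp add: field_simps)
    then show ?thesis using True t c by (simp add: trunc_def)
  next
    case False
    then have "c * t > 1" using c by (simp add: field_simps)
    then show ?thesis using False t c by (simp add: trunc_def)
  qed
next
  assume t: "t < 0"
  have "trunc (inverse c) t \<le> 0" using t c by (simp add: trunc_def)
  then show "c * trunc (inverse c) t \<le> 0" using c by (simp add: mult_nonneg_nonpos)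
qed

lemma r_mono:
  fixes t :: real
  shows "ennreal (real (Suc i) * trunc (inverse (real (Suc i))) t)
       \<le> ennreal (real (Suc (Suc i)) * trunc (inverse (real (Suc (Suc i)))) t)"
proof (cases "t \<ge> 0")
  case True
  have "real (Suc i) * t \<le> real (Suc (Suc i)) * t" by (rule mult_right_mono) (use True in auto)
  then have "min (real (Suc i) * t) 1 \<le> min (real (Suc (Suc i)) * t) 1" by linarith
  then show ?thesis using True r_formula(1)[of "real (Suc i)" t] r_formula(1)[of "real (Suc (Suc i))" t]
    by (intro ennreal_leI) simp
next
  case False
  then have "real (Suc i) * trunc (inverse (real (Suc i))) t \<le> 0" using r_formula(2)[of "real (Suc i)" t] by simp
  then have "ennreal (real (Suc i) * trunc (inverse (real (Suc i))) t) = 0" by (simp add: ennreal_eq_0_iff)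
  then show ?thesis by simp
qed

lemma r_lim:
  fixes t :: real and w :: ennreal
  shows "(\<lambda>i. w * ennreal (real (Suc i) * trunc (inverse (real (Suc i))) t)) \<longlonglongrightarrow> (if t > 0 then w else 0)"
proof (cases "t > 0")
  case True
  obtain N :: nat where N: "real N * t > 1"
    using reals_Archimedean3[OF True] by blast
  have "eventually (\<lambda>i. w * ennreal (real (Suc i) * trunc (inverse (real (Suc i))) t) = w) sequentially"
    unfolding eventually_sequentially
  proof (intro exI allI impI)
    fix i assume "i \<ge> N"
    then have "real (Suc i) * t \<ge> real N * t" using True by (intro mult_right_mono) auto
    then have "min (real (Suc i) * t) 1 = 1" using N by simp
    then show "w * ennreal (real (Suc i) * trunc (inverse (real (Suc i))) t) = w"
      using r_formula(1)[of "real (Suc i)" t] True by simp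
  qed
  then show ?thesis using True by (simp add: tendsto_eventually)
next
  case False
  have "ennreal (real (Suc i) * trunc (inverse (real (Suc i))) t) = 0" for i
  proof (cases "t = 0")
    case True then show ?thesis by (simp add: trunc_def)
  next
    case False2: False
    then have "t < 0" using False by simp
    then have "real (Suc i) * trunc (inverse (real (Suc i))) t \<le> 0" using r_formula(2)[of "real (Suc i)" t] by simp
    then show ?thesis by (simp add: ennreal_eq_0_iff)
  qed
  then show ?thesis using False by simp
qed


theorem lemma3:
  fixes \<Omega> :: "(real^'n) set"
    and q \<theta> \<alpha> \<beta> \<mu> \<nu> :: real
    and p :: "'n \<Rightarrow> real"
    and ord :: "nat \<Rightarrow> 'n"
    and f a b :: "real^'n \<Rightarrow> real"
    and u :: "nat \<Rightarrow> real^'n \<Rightarrow> real"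
    and Du :: "nat \<Rightarrow> 'n \<Rightarrow> real^'n \<Rightarrow> real"
  assumes N3: "CARD('n) \<ge> 3"
    and open_\<Omega>: "open \<Omega>" and bdd_\<Omega>: "bounded \<Omega>"
    and q: "q > 0" and \<theta>: "0 < \<theta>" "\<theta> < 1"
    and f_L1: "integrable (lebesgue_on \<Omega>) f"
    and f_nonneg: "AE x in lebesgue_on \<Omega>. f x \<ge> 0"
    and f_nonzero: "\<not> (AE x in lebesgue_on \<Omega>. f x = 0)"
    and ord: "bij_betw ord {1..CARD('n)} UNIV"
    and p_sorted: "\<And>i i'. 1 \<le> i \<Longrightarrow> i \<le> i' \<Longrightarrow> i' \<le> CARD('n) \<Longrightarrow> p (ord i) \<le> p (ord i')"
    and p_ge2: "\<And>j. p j \<ge> 2"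
    and pbar: "2 \<le> real CARD('n) / (\<Sum>j\<in>UNIV. 1 / p j)"
              "real CARD('n) / (\<Sum>j\<in>UNIV. 1 / p j) < real CARD('n)"
    and a_meas: "a \<in> borel_measurable (lebesgue_on \<Omega>)"
    and b_meas: "b \<in> borel_measurable (lebesgue_on \<Omega>)"
    and \<alpha>: "0 < \<alpha>" and a_bds: "AE x in lebesgue_on \<Omega>. \<alpha> \<le> a x \<and> a x \<le> \<beta>"
    and \<mu>: "0 < \<mu>" and b_bds: "AE x in lebesgue_on \<Omega>. \<mu> \<le> b x \<and> b x \<le> \<nu>"
    and u_W: "\<And>n. n \<ge> 1 \<Longrightarrow> W01p \<Omega> p (u n) (Du n)"
    and u_nonneg: "\<And>n. n \<ge> 1 \<Longrightarrow> AE x in lebesgue_on \<Omega>. u n x \<ge> 0"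
    and u_eq: "\<And>n \<phi> D\<phi>. n \<ge> 1 \<Longrightarrow> W01p \<Omega> p \<phi> D\<phi> \<Longrightarrow> Linf \<Omega> \<phi> \<Longrightarrow>
        (\<forall>j. integrable (lebesgue_on \<Omega>) (\<lambda>x. (a x + u n x powr q) *
                 \<bar>Du n j x\<bar> powr (p j - 2) * Du n j x * D\<phi> j x)) \<and>
        (\<forall>j. integrable (lebesgue_on \<Omega>) (\<lambda>x. b x * (u n x * \<bar>Du n j x\<bar> powr (p j)) /
                 (u n x + 1 / real n) powr (\<theta> + 1) * \<phi> x)) \<and>
        (\<Sum>j\<in>UNIV. LINT x:\<Omega>|lebesgue. (a x + u n x powr q) *
                 \<bar>Du n j x\<bar> powr (p j - 2) * Du n j x * D\<phi> j x)
        + (\<Sum>j\<in>UNIV. LINT x:\<Omega>|lebesgue. b x * (u n x * \<bar>Du n j x\<bar> powr (p j)) /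
                 (u n x + 1 / real n) powr (\<theta> + 1) * \<phi> x)
        = (LINT x:\<Omega>|lebesgue. trunc (real n) (f x) * \<phi> x)"
  shows "\<forall>n\<ge>1. \<forall>k>0.
     ennreal \<mu> * (\<Sum>j\<in>UNIV. \<integral>\<^sup>+ x. ennreal (u n x * \<bar>Du n j x\<bar> powr (p j) /
                 (u n x + 1 / real n) powr (\<theta> + 1)) \<partial>(lebesgue_on \<Omega>))
       \<le> (\<integral>\<^sup>+ x. ennreal (f x) \<partial>(lebesgue_on \<Omega>))
   \<and> (\<exists>G :: 'n \<Rightarrow> real^'n \<Rightarrow> real. (\<forall>j. weak_pderiv \<Omega> j (\<lambda>x. trunc k (u n x)) (G j)) \<and>
       ennreal (1 / k) * (\<Sum>j\<in>UNIV. \<integral>\<^sup>+ x. ennreal ((a x + u n x powr q) * \<bar>G j x\<bar> powr (p j))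
                 \<partial>(lebesgue_on \<Omega>))
       \<le> (\<integral>\<^sup>+ x. ennreal (f x * trunc k (u n x) / k) \<partial>(lebesgue_on \<Omega>)))"
proof (intro allI impI)
  fix n :: nat and k :: real
  assume n: "1 \<le> n" and k: "0 < k"
  let ?M = "lebesgue_on \<Omega>"
  have \<Omega>l: "\<Omega> \<in> lmeasurable" using lmeasurable_open[OF bdd_\<Omega> open_\<Omega>] .
  have \<Omega>m: "\<Omega> \<in> sets lebesgue" using \<Omega>l by (rule fmeasurableD)
  interpret F: finite_measure ?M by (rule finite_measure_lebesgue_on[OF \<Omega>l])
  define U where "U = u n"
  define D where "D = Du n"
  have WU: "W01p \<Omega> p U D" using u_W[OF n] by (simp add: U_def D_def)
  have W1: "W011 \<Omega> U D" using WU by (simp add: W01p_def)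
  have UI: "integrable ?M U" and DI: "\<And>j. integrable ?M (D j)" using W011_facts[OF \<Omega>m W1] by auto
  have UB: "U \<in> borel_measurable ?M" using UI by (rule borel_measurable_integrable)
  have DB: "D j \<in> borel_measurable ?M" for j using DI by (rule borel_measurable_integrable)
  have fB: "f \<in> borel_measurable ?M" using f_L1 by (rule borel_measurable_integrable)
  have aB: "a \<in> borel_measurable ?M" by (rule a_meas)
  have bB: "b \<in> borel_measurable ?M" by (rule b_meas)
  have nr: "real n > 0" using n by simp
  have AEall: "AE x in ?M. (\<alpha> \<le> a x \<and> a x \<le> \<beta>) \<and> (\<mu> \<le> b x \<and> b x \<le> \<nu>) \<and> 0 \<le> U x \<and> 0 \<le> f x"
    using a_bds b_bds u_nonneg[OF n] f_nonneg by (simp add: U_def)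
  define T where "T s x = trunc s (U x)" for s x
  define G where "G s j x = (if \<bar>U x\<bar> \<le> s then D j x else 0)" for s j x
  define w where "w j x = U x * \<bar>D j x\<bar> powr p j / (U x + 1 / real n) powr (\<theta> + 1)" for j x
  define A where "A s j x = (a x + U x powr q) * \<bar>G s j x\<bar> powr p j" for s j x
  have TB: "T s \<in> borel_measurable ?M" for s unfolding T_def[abs_def] trunc_def using UB by measurable
  have wB: "w j \<in> borel_measurable ?M" for j unfolding w_def[abs_def] using UB DB by measurable
  have w0: "0 \<le> U x \<Longrightarrow> 0 \<le> w j x" for j x unfolding w_def by simp
  have T0: "s > 0 \<Longrightarrow> 0 \<le> U x \<Longrightarrow> 0 \<le> T s x \<and> T s x \<le> s" for s x
    unfolding T_def using trunc_nonneg_facts by blast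
  have cons: "(\<forall>j. integrable ?M (A s j)) \<and> (\<forall>j. integrable ?M (\<lambda>x. b x * w j x * T s x)) \<and>
      (\<Sum>j\<in>UNIV. integral\<^sup>L ?M (A s j)) + (\<Sum>j\<in>UNIV. integral\<^sup>L ?M (\<lambda>x. b x * w j x * T s x))
        \<le> integral\<^sup>L ?M (\<lambda>x. f x * T s x)" if s: "s > 0" for s
  proof -
    have WT: "W01p \<Omega> p (T s) (G s)" unfolding T_def[abs_def] G_def[abs_def]
      by (rule trunc_W01p[OF open_\<Omega> bdd_\<Omega> WU s])
    have LT: "Linf \<Omega> (T s)" unfolding Linf_def
    proof (intro conjI exI)
      show "T s \<in> borel_measurable ?M" by (rule TB)
      show "AE x in ?M. \<bar>T s x\<bar> \<le> s" by (rule AE_I2) (simp add: T_def trunc_abs_le(2)[OF s])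
    qed
    note E = u_eq[OF n WT LT, folded U_def D_def]
    have Aeq: "(\<lambda>x. (a x + U x powr q) * \<bar>D j x\<bar> powr (p j - 2) * D j x * G s j x) = A s j" for j
    proof
      fix x show "(a x + U x powr q) * \<bar>D j x\<bar> powr (p j - 2) * D j x * G s j x = A s j x"
        unfolding A_def G_def by (rule A_eq[OF p_ge2])
    qed
    have Beq: "(\<lambda>x. b x * (U x * \<bar>D j x\<bar> powr p j) / (U x + 1 / real n) powr (\<theta> + 1) * T s x)
        = (\<lambda>x. b x * w j x * T s x)" for j
      by (simp add: w_def fun_eq_iff)
    have AI: "\<forall>j. integrable ?M (A s j)" using E Aeq by simp
    have BI: "\<forall>j. integrable ?M (\<lambda>x. b x * w j x * T s x)" using E Beq by simp
    have eq: "(\<Sum>j\<in>UNIV. integral\<^sup>L ?M (A s j)) + (\<Sum>j\<in>UNIV. integral\<^sup>L ?M (\<lambda>x. b x * w j x * T s x))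
        = integral\<^sup>L ?M (\<lambda>x. trunc (real n) (f x) * T s x)"
      using E unfolding set_lint_eq[OF \<Omega>m] Aeq Beq by simp
    have tfI: "integrable ?M (\<lambda>x. trunc (real n) (f x))"
    proof (rule Bochner_Integration.integrable_bound[OF f_L1])
      show "(\<lambda>x. trunc (real n) (f x)) \<in> borel_measurable ?M" unfolding trunc_def using fB by measurable
      show "AE x in ?M. norm (trunc (real n) (f x)) \<le> norm (f x)" using trunc_abs_le(1)[OF nr] by simp
    qed
    have Tbd: "\<bar>T s x\<bar> \<le> s" for x by (simp add: T_def trunc_abs_le(2)[OF s])
    have i1: "integrable ?M (\<lambda>x. trunc (real n) (f x) * T s x)" by (rule int_mult_bdd[OF tfI TB Tbd])
    have i2: "integrable ?M (\<lambda>x. f x * T s x)" by (rule int_mult_bdd[OF f_L1 TB Tbd])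
    have "integral\<^sup>L ?M (\<lambda>x. trunc (real n) (f x) * T s x) \<le> integral\<^sup>L ?M (\<lambda>x. f x * T s x)"
    proof (rule integral_mono_AE[OF i1 i2])
      show "AE x in ?M. trunc (real n) (f x) * T s x \<le> f x * T s x"
        using AEall
      proof eventually_elim
        case (elim x)
        have "trunc (real n) (f x) \<le> f x" using elim nr by (simp add: trunc_def)
        moreover have "0 \<le> T s x" using T0[OF s] elim by blast
        ultimately show ?case by (rule mult_right_mono)
      qed
    qed
    then show ?thesis using AI BI eq by simp
  qed
  have A0: "AE x in ?M. 0 \<le> A s j x" for s j
    using AEall
  proof eventually_elim
    case (elim x)
    have "0 \<le> a x + U x powr q" using elim \<alpha> by simp
    then show ?case unfolding A_def by simp
  qed
  have B0: "AE x in ?M. 0 \<le> b x * w j x * T s x" if s: "s > 0" for s j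
    using AEall
  proof eventually_elim
    case (elim x)
    have "0 \<le> b x" using elim \<mu> by simp
    moreover have "0 \<le> w j x" using w0 elim by blast
    moreover have "0 \<le> T s x" using T0[OF s] elim by blast
    ultimately show ?case by simp
  qed
  have consk: "(\<forall>j. integrable ?M (A k j)) \<and> (\<forall>j. integrable ?M (\<lambda>x. b x * w j x * T k x)) \<and>
      (\<Sum>j\<in>UNIV. integral\<^sup>L ?M (A k j)) + (\<Sum>j\<in>UNIV. integral\<^sup>L ?M (\<lambda>x. b x * w j x * T k x))
        \<le> integral\<^sup>L ?M (\<lambda>x. f x * T k x)" by (rule cons[OF k])
  have AIk: "integrable ?M (A k j)" for j using consk by blast
  have sumB0: "0 \<le> (\<Sum>j\<in>UNIV. integral\<^sup>L ?M (\<lambda>x. b x * w j x * T k x))"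
    by (intro sum_nonneg integral_nonneg_AE B0[OF k])
  have realk: "(\<Sum>j\<in>UNIV. integral\<^sup>L ?M (A k j)) \<le> integral\<^sup>L ?M (\<lambda>x. f x * T k x)"
    using consk sumB0 by linarith
  have IA0: "0 \<le> integral\<^sup>L ?M (A k j)" for j by (rule integral_nonneg_AE[OF A0])
  have nnA: "(\<integral>\<^sup>+ x. ennreal (A k j x) \<partial>?M) = ennreal (integral\<^sup>L ?M (A k j))" for j
    by (rule nn_integral_eq_integral[OF AIk A0])
  have Tbdk: "\<bar>T k x\<bar> \<le> k" for x by (simp add: T_def trunc_abs_le(2)[OF k])
  have fTI: "integrable ?M (\<lambda>x. f x * T k x)" by (rule int_mult_bdd[OF f_L1 TB Tbdk])
  have fT0: "AE x in ?M. 0 \<le> f x * T k x / k"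
    using AEall
  proof eventually_elim
    case (elim x)
    have "0 \<le> T k x" using T0[OF k] elim by blast
    then show ?case using elim k by simp
  qed
  have nnR: "(\<integral>\<^sup>+ x. ennreal (f x * T k x / k) \<partial>?M) = ennreal (integral\<^sup>L ?M (\<lambda>x. f x * T k x) / k)"
  proof -
    have "(\<integral>\<^sup>+ x. ennreal (f x * T k x / k) \<partial>?M) = ennreal (integral\<^sup>L ?M (\<lambda>x. f x * T k x / k))"
      by (rule nn_integral_eq_integral[OF _ fT0]) (use fTI in simp)
    then show ?thesis by simp
  qed
  have part2: "ennreal (1 / k) * (\<Sum>j\<in>UNIV. \<integral>\<^sup>+ x. ennreal (A k j x) \<partial>?M)
      \<le> (\<integral>\<^sup>+ x. ennreal (f x * T k x / k) \<partial>?M)"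
  proof -
    have "(\<Sum>j\<in>UNIV. \<integral>\<^sup>+ x. ennreal (A k j x) \<partial>?M) = ennreal (\<Sum>j\<in>UNIV. integral\<^sup>L ?M (A k j))"
      unfolding nnA by (rule sum_ennreal) (rule IA0)
    moreover have "0 \<le> (\<Sum>j\<in>UNIV. integral\<^sup>L ?M (A k j))" by (intro sum_nonneg IA0)
    ultimately have "ennreal (1 / k) * (\<Sum>j\<in>UNIV. \<integral>\<^sup>+ x. ennreal (A k j x) \<partial>?M)
        = ennreal (1 / k * (\<Sum>j\<in>UNIV. integral\<^sup>L ?M (A k j)))"
      using k by (simp only: ennreal_mult[symmetric] divide_nonneg_pos zero_less_one less_imp_le)
    also have "\<dots> \<le> ennreal (integral\<^sup>L ?M (\<lambda>x. f x * T k x) / k)"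
    proof (rule ennreal_leI)
      show "1 / k * (\<Sum>j\<in>UNIV. integral\<^sup>L ?M (A k j)) \<le> integral\<^sup>L ?M (\<lambda>x. f x * T k x) / k"
        using realk k by (simp add: divide_right_mono)
    qed
    finally show ?thesis unfolding nnR .
  qed
  have weakk: "\<forall>j. weak_pderiv \<Omega> j (T k) (G k j)"
  proof -
    have WT: "W01p \<Omega> p (T k) (G k)" unfolding T_def[abs_def] G_def[abs_def]
      by (rule trunc_W01p[OF open_\<Omega> bdd_\<Omega> WU k])
    then show ?thesis by (simp add: W01p_def W011_def)
  qed
  define R where "R i x = real (Suc i) * T (inverse (real (Suc i))) x" for i x
  have fint: "ennreal (integral\<^sup>L ?M f) = (\<integral>\<^sup>+ x. ennreal (f x) \<partial>?M)"
    by (rule nn_integral_eq_integral[OF f_L1 f_nonneg, symmetric])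
  have stepi: "ennreal \<mu> * (\<Sum>j\<in>UNIV. \<integral>\<^sup>+ x. ennreal (w j x) * ennreal (R i x) \<partial>?M) \<le> (\<integral>\<^sup>+ x. ennreal (f x) \<partial>?M)" for i
  proof -
    define s where "s = inverse (real (Suc i))"
    have s: "s > 0" by (simp add: s_def)
    have cs: "real (Suc i) * s = 1" by (simp add: s_def)
    have consi: "(\<forall>j. integrable ?M (A s j)) \<and> (\<forall>j. integrable ?M (\<lambda>x. b x * w j x * T s x)) \<and>
      (\<Sum>j\<in>UNIV. integral\<^sup>L ?M (A s j)) + (\<Sum>j\<in>UNIV. integral\<^sup>L ?M (\<lambda>x. b x * w j x * T s x))
        \<le> integral\<^sup>L ?M (\<lambda>x. f x * T s x)" by (rule cons[OF s])
    have BIs: "integrable ?M (\<lambda>x. b x * w j x * T s x)" for j using consi by blast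
    have sumA0: "0 \<le> (\<Sum>j\<in>UNIV. integral\<^sup>L ?M (A s j))"
      by (intro sum_nonneg integral_nonneg_AE A0)
    have Tbds: "\<bar>T s x\<bar> \<le> s" for x by (simp add: T_def trunc_abs_le(2)[OF s])
    have fTIs: "integrable ?M (\<lambda>x. f x * T s x)" by (rule int_mult_bdd[OF f_L1 TB Tbds])
    have fTs: "integral\<^sup>L ?M (\<lambda>x. f x * T s x) \<le> s * integral\<^sup>L ?M f"
    proof -
      have "integral\<^sup>L ?M (\<lambda>x. f x * T s x) \<le> integral\<^sup>L ?M (\<lambda>x. s * f x)"
      proof (rule integral_mono_AE[OF fTIs])
        show "integrable ?M (\<lambda>x. s * f x)" using f_L1 by simp
        show "AE x in ?M. f x * T s x \<le> s * f x"
          using AEall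
        proof eventually_elim
          case (elim x)
          have "T s x \<le> s" using T0[OF s] elim by blast
          then have "f x * T s x \<le> f x * s" using elim by (intro mult_left_mono) auto
          then show ?case by (simp add: mult.commute)
        qed
      qed
      then show ?thesis by simp
    qed
    have wTI: "integrable ?M (\<lambda>x. w j x * T s x)" for j
    proof (rule Bochner_Integration.integrable_bound[where f="\<lambda>x. b x * w j x * T s x / \<mu>"])
      show "integrable ?M (\<lambda>x. b x * w j x * T s x / \<mu>)" using BIs[of j] by simp
      show "(\<lambda>x. w j x * T s x) \<in> borel_measurable ?M" using wB[of j] TB[of s] by measurable
      show "AE x in ?M. norm (w j x * T s x) \<le> norm (b x * w j x * T s x / \<mu>)"
        using AEall
      proof eventually_elim
        case (elim x)
        have wT: "0 \<le> w j x * T s x" using w0[of x j] T0[OF s, of x] elim by simp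
        have "\<mu> * (w j x * T s x) \<le> b x * (w j x * T s x)" using elim wT by (intro mult_right_mono) auto
        then have ineq: "w j x * T s x \<le> b x * w j x * T s x / \<mu>" using \<mu> by (simp add: field_simps)
        have nn: "0 \<le> b x * w j x * T s x / \<mu>"
        proof -
          have "0 \<le> b x" using elim \<mu> by linarith
          then have "0 \<le> b x * (w j x * T s x)" using wT by simp
          then have "0 \<le> b x * w j x * T s x" by (simp add: mult.assoc)
          then show ?thesis using \<mu> by simp
        qed
        have n1: "norm (w j x * T s x) = w j x * T s x" using wT by simp
        have n2: "norm (b x * w j x * T s x / \<mu>) = b x * w j x * T s x / \<mu>"
          using nn by (simp only: real_norm_def abs_of_nonneg)
        show ?case unfolding n1 n2 by (rule ineq)
      qed
    qed
    have muB: "\<mu> * integral\<^sup>L ?M (\<lambda>x. w j x * T s x) \<le> integral\<^sup>L ?M (\<lambda>x. b x * w j x * T s x)" for j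
    proof -
      have "integral\<^sup>L ?M (\<lambda>x. \<mu> * (w j x * T s x)) \<le> integral\<^sup>L ?M (\<lambda>x. b x * w j x * T s x)"
      proof (rule integral_mono_AE[OF _ BIs])
        show "integrable ?M (\<lambda>x. \<mu> * (w j x * T s x))" using wTI[of j] by simp
        show "AE x in ?M. \<mu> * (w j x * T s x) \<le> b x * w j x * T s x"
          using AEall
        proof eventually_elim
          case (elim x)
          have wT: "0 \<le> w j x * T s x" using w0[of x j] T0[OF s, of x] elim by simp
          have "\<mu> * (w j x * T s x) \<le> b x * (w j x * T s x)" using elim wT by (intro mult_right_mono) auto
          then show ?case by (simp add: mult.assoc)
        qed
      qed
      then show ?thesis by simp
    qed
    have real1: "\<mu> * (\<Sum>j\<in>UNIV. integral\<^sup>L ?M (\<lambda>x. w j x * T s x)) \<le> s * integral\<^sup>L ?M f"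
    proof -
      have "\<mu> * (\<Sum>j\<in>UNIV. integral\<^sup>L ?M (\<lambda>x. w j x * T s x)) = (\<Sum>j\<in>UNIV. \<mu> * integral\<^sup>L ?M (\<lambda>x. w j x * T s x))"
        by (simp add: sum_distrib_left)
      also have "\<dots> \<le> (\<Sum>j\<in>UNIV. integral\<^sup>L ?M (\<lambda>x. b x * w j x * T s x))"
        by (rule sum_mono) (rule muB)
      also have "\<dots> \<le> integral\<^sup>L ?M (\<lambda>x. f x * T s x)" using consi sumA0 by linarith
      also have "\<dots> \<le> s * integral\<^sup>L ?M f" by (rule fTs)
      finally show ?thesis .
    qed
    have Req: "R i x = real (Suc i) * T s x" for x by (simp add: R_def s_def)
    have wRI: "integrable ?M (\<lambda>x. w j x * R i x)" for j
    proof -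
      have I: "integrable ?M (\<lambda>x. real (Suc i) * (w j x * T s x))" using wTI[of j] by simp
      have e: "(\<lambda>x. w j x * R i x) = (\<lambda>x. real (Suc i) * (w j x * T s x))"
        by (simp add: Req fun_eq_iff mult_ac)
      show ?thesis by (subst e) (rule I)
    qed
    have intR: "integral\<^sup>L ?M (\<lambda>x. w j x * R i x) = real (Suc i) * integral\<^sup>L ?M (\<lambda>x. w j x * T s x)" for j
    proof -
      have "(\<lambda>x. w j x * R i x) = (\<lambda>x. real (Suc i) * (w j x * T s x))"
        by (simp add: Req fun_eq_iff mult_ac)
      then show ?thesis by simp
    qed
    have wR0: "AE x in ?M. 0 \<le> w j x * R i x" for j
      using AEall
    proof eventually_elim
      case (elim x)
      have "0 \<le> w j x" using w0 elim by blast
      moreover have "0 \<le> R i x" using T0[OF s, of x] elim by (simp add: Req)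
      ultimately show ?case by simp
    qed
    have nnwR: "(\<integral>\<^sup>+ x. ennreal (w j x) * ennreal (R i x) \<partial>?M) = ennreal (integral\<^sup>L ?M (\<lambda>x. w j x * R i x))" for j
    proof -
      have "(\<integral>\<^sup>+ x. ennreal (w j x) * ennreal (R i x) \<partial>?M) = (\<integral>\<^sup>+ x. ennreal (w j x * R i x) \<partial>?M)"
      proof (rule nn_integral_cong_AE)
        show "AE x in ?M. ennreal (w j x) * ennreal (R i x) = ennreal (w j x * R i x)"
          using AEall
        proof eventually_elim
          case (elim x)
          have "0 \<le> w j x" using w0 elim by blast
          moreover have "0 \<le> R i x" using T0[OF s, of x] elim by (simp add: Req)
          ultimately show ?case by (simp add: ennreal_mult)
        qed
      qed
      also have "\<dots> = ennreal (integral\<^sup>L ?M (\<lambda>x. w j x * R i x))"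
        by (rule nn_integral_eq_integral[OF wRI wR0])
      finally show ?thesis .
    qed
    have IwR0: "0 \<le> integral\<^sup>L ?M (\<lambda>x. w j x * R i x)" for j by (rule integral_nonneg_AE[OF wR0])
    have real2: "\<mu> * (\<Sum>j\<in>UNIV. integral\<^sup>L ?M (\<lambda>x. w j x * R i x)) \<le> integral\<^sup>L ?M f"
    proof -
      have "\<mu> * (\<Sum>j\<in>UNIV. integral\<^sup>L ?M (\<lambda>x. w j x * R i x))
          = real (Suc i) * (\<mu> * (\<Sum>j\<in>UNIV. integral\<^sup>L ?M (\<lambda>x. w j x * T s x)))"
      proof -
        have "(\<Sum>j\<in>UNIV. integral\<^sup>L ?M (\<lambda>x. w j x * R i x)) = (\<Sum>j\<in>UNIV. real (Suc i) * integral\<^sup>L ?M (\<lambda>x. w j x * T s x))"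
          by (simp only: intR)
        also have "\<dots> = real (Suc i) * (\<Sum>j\<in>UNIV. integral\<^sup>L ?M (\<lambda>x. w j x * T s x))"
          by (rule sum_distrib_left[symmetric])
        finally show ?thesis by simp
      qed
      also have "\<dots> \<le> real (Suc i) * (s * integral\<^sup>L ?M f)"
        by (rule mult_left_mono[OF real1]) simp
      also have "\<dots> = integral\<^sup>L ?M f" using cs by (simp add: mult.assoc[symmetric])
      finally show ?thesis .
    qed
    have "ennreal \<mu> * (\<Sum>j\<in>UNIV. \<integral>\<^sup>+ x. ennreal (w j x) * ennreal (R i x) \<partial>?M)
        = ennreal (\<mu> * (\<Sum>j\<in>UNIV. integral\<^sup>L ?M (\<lambda>x. w j x * R i x)))"
    proof -
      have "(\<Sum>j\<in>UNIV. \<integral>\<^sup>+ x. ennreal (w j x) * ennreal (R i x) \<partial>?M)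
          = ennreal (\<Sum>j\<in>UNIV. integral\<^sup>L ?M (\<lambda>x. w j x * R i x))"
        unfolding nnwR by (rule sum_ennreal) (rule IwR0)
      moreover have "0 \<le> (\<Sum>j\<in>UNIV. integral\<^sup>L ?M (\<lambda>x. w j x * R i x))" by (intro sum_nonneg IwR0)
      ultimately show ?thesis using \<mu> by (simp only: ennreal_mult[symmetric] less_imp_le)
    qed
    also have "\<dots> \<le> ennreal (integral\<^sup>L ?M f)" by (rule ennreal_leI[OF real2])
    finally show ?thesis unfolding fint .
  qed
  have limj: "(\<lambda>i. \<integral>\<^sup>+ x. ennreal (w j x) * ennreal (R i x) \<partial>?M) \<longlonglongrightarrow> (\<integral>\<^sup>+ x. ennreal (w j x) \<partial>?M)" for j
  proof -
    have "(\<lambda>i. \<integral>\<^sup>+ x. ennreal (w j x) * ennreal (R i x) \<partial>?M) \<longlonglongrightarrow>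
        (\<integral>\<^sup>+ x. (if U x > 0 then ennreal (w j x) else 0) \<partial>?M)"
    proof (rule nn_integral_LIMSEQ)
      show "incseq (\<lambda>i x. ennreal (w j x) * ennreal (R i x))"
      proof (rule incseq_SucI, rule le_funI)
        fix i x
        show "ennreal (w j x) * ennreal (R i x) \<le> ennreal (w j x) * ennreal (R (Suc i) x)"
        proof (rule mult_left_mono)
          show "ennreal (R i x) \<le> ennreal (R (Suc i) x)" unfolding R_def T_def by (rule r_mono)
        qed simp
      qed
      show "(\<lambda>x. ennreal (w j x) * ennreal (R i x)) \<in> borel_measurable ?M" for i
        unfolding R_def T_def trunc_def using wB[of j] UB by measurable
      show "(\<lambda>i. ennreal (w j x) * ennreal (R i x)) \<longlonglongrightarrow> (if U x > 0 then ennreal (w j x) else 0)" for x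
        unfolding R_def T_def by (rule r_lim)
    qed
    moreover have "(\<integral>\<^sup>+ x. (if U x > 0 then ennreal (w j x) else 0) \<partial>?M) = (\<integral>\<^sup>+ x. ennreal (w j x) \<partial>?M)"
    proof (rule nn_integral_cong_AE)
      show "AE x in ?M. (if U x > 0 then ennreal (w j x) else 0) = ennreal (w j x)"
        using AEall
      proof eventually_elim
        case (elim x)
        show ?case
        proof (cases "U x > 0")
          case False
          then have "U x = 0" using elim by simp
          then show ?thesis by (simp add: w_def)
        qed simp
      qed
    qed
    ultimately show ?thesis by simp
  qed
  have part1: "ennreal \<mu> * (\<Sum>j\<in>UNIV. \<integral>\<^sup>+ x. ennreal (w j x) \<partial>?M) \<le> (\<integral>\<^sup>+ x. ennreal (f x) \<partial>?M)"
  proof (rule LIMSEQ_le_const2)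
    show "(\<lambda>i. ennreal \<mu> * (\<Sum>j\<in>UNIV. \<integral>\<^sup>+ x. ennreal (w j x) * ennreal (R i x) \<partial>?M))
        \<longlonglongrightarrow> ennreal \<mu> * (\<Sum>j\<in>UNIV. \<integral>\<^sup>+ x. ennreal (w j x) \<partial>?M)"
      by (intro ennreal_tendsto_cmult tendsto_sum limj) simp
    show "\<exists>N. \<forall>i\<ge>N. ennreal \<mu> * (\<Sum>j\<in>UNIV. \<integral>\<^sup>+ x. ennreal (w j x) * ennreal (R i x) \<partial>?M) \<le> (\<integral>\<^sup>+ x. ennreal (f x) \<partial>?M)"
      using stepi by blast
  qed
  have final: "ennreal \<mu> * (\<Sum>j\<in>UNIV. \<integral>\<^sup>+ x. ennreal (U x * \<bar>D j x\<bar> powr p j / (U x + 1 / real n) powr (\<theta> + 1)) \<partial>?M)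
         \<le> (\<integral>\<^sup>+ x. ennreal (f x) \<partial>?M)
     \<and> (\<exists>G. (\<forall>j. weak_pderiv \<Omega> j (\<lambda>x. trunc k (U x)) (G j)) \<and>
         ennreal (1 / k) * (\<Sum>j\<in>UNIV. \<integral>\<^sup>+ x. ennreal ((a x + U x powr q) * \<bar>G j x\<bar> powr p j) \<partial>?M)
         \<le> (\<integral>\<^sup>+ x. ennreal (f x * trunc k (U x) / k) \<partial>?M))"
  proof (intro conjI exI)
    show "ennreal \<mu> * (\<Sum>j\<in>UNIV. \<integral>\<^sup>+ x. ennreal (U x * \<bar>D j x\<bar> powr p j / (U x + 1 / real n) powr (\<theta> + 1)) \<partial>?M)
         \<le> (\<integral>\<^sup>+ x. ennreal (f x) \<partial>?M)" using part1 by (simp add: w_def)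
    show "\<forall>j. weak_pderiv \<Omega> j (\<lambda>x. trunc k (U x)) (G k j)" using weakk by (simp add: T_def[abs_def])
    show "ennreal (1 / k) * (\<Sum>j\<in>UNIV. \<integral>\<^sup>+ x. ennreal ((a x + U x powr q) * \<bar>G k j x\<bar> powr p j) \<partial>?M)
         \<le> (\<integral>\<^sup>+ x. ennreal (f x * trunc k (U x) / k) \<partial>?M)" using part2 by (simp add: A_def T_def)
  qed
  then show "ennreal \<mu> * (\<Sum>j\<in>UNIV. \<integral>\<^sup>+ x. ennreal (u n x * \<bar>Du n j x\<bar> powr p j / (u n x + 1 / real n) powr (\<theta> + 1)) \<partial>?M)
         \<le> (\<integral>\<^sup>+ x. ennreal (f x) \<partial>?M)
     \<and> (\<exists>G. (\<forall>j. weak_pderiv \<Omega> j (\<lambda>x. trunc k (u n x)) (G j)) \<and>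
         ennreal (1 / k) * (\<Sum>j\<in>UNIV. \<integral>\<^sup>+ x. ennreal ((a x + u n x powr q) * \<bar>G j x\<bar> powr p j) \<partial>?M)
         \<le> (\<integral>\<^sup>+ x. ennreal (f x * trunc k (u n x) / k) \<partial>?M))"
    by (simp only: U_def D_def)
qed

end
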